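(* Let $\nu$ be a Borel probability measure on $\operatorname{Hom}(\mathbb{S}^1)$ such that $\Gamma_\nu$ is proximal and does not fix any point in $\mathbb{S}^1$, and let $q\in(0,1)$ be a local contraction rate of $\nu$. Then for every $x,y\in\mathbb{S}^1$ with $x\neq y$ and $\nu^{\mathbb{N}}$-almost every $\omega\in X_\nu^{\mathbb{N}}$, $$\lim_{n\to\infty}\frac1n\log\operatorname{diam} f^n_\omega([x,y])\le\log q\quad\text{or}\quad\lim_{n\to\infty}\frac1n\log\operatorname{diam} f^n_\omega([y,x])\le\log q.$$
   Context: $\mathbb{S}^1=\mathbb{R}/\mathbb{Z}$ with usual metric $d$; $\operatorname{Hom}(\mathbb{S}^1)$ is the group of all homeomorphisms of $\mathbb{S}^1$. $X_\nu$ is the topological support of $\nu$, $\Gamma_\nu$ the semigroup generated by $X_\nu$. $\Gamma_\nu$ is proximal if for all $x,y$ there exists $(g_n)$ in $\Gamma_\nu$ with $d(g_n(x),g_n(y))\to0$; it does not fix any point if there is no $x$ with $f(x)=x$ for all $f\in\Gamma_\nu$. For $\omega=(f_n)\in X_\nu^{\mathbb{N}}$ (with product measure $\nu^{\mathbb{N}}$), $f^n_\omega=f_n\circ\cdots\circ f_1$. For $x\ne y$, $[x,y]$ and $[y,x]$ denote the two closed arcs of $\mathbb{S}^1$ with endpoints $x,y$. $\nu$ is locally contracting with local contraction rate $q\in(0,1)$ if for every $x\in\mathbb{S}^1$ and $\nu^{\mathbb{N}}$-a.e. $\omega$ there is an interval $I$ with $x$ in its interior such that $\operatorname{diam} f^n_\omega(I)\le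 q^n$ for all $n$ (such a $q$ exists under the hypotheses). *)

theory Defs
  imports "HOL-Probability.Probability"
begin

text \<open>The circle S^1 = R/Z, represented by the fundamental domain [0,1),
  with the usual quotient metric.\<close>

definition circle :: "real set" where
  "circle = {0..<1}"

definition cdist :: "real \<Rightarrow> real \<Rightarrow> real" where
  "cdist x y = min \<bar>x - y\<bar> (1 - \<bar>x - y\<bar>)"

definition cdiam :: "real set \<Rightarrow> real" where
  "cdiam A = Sup {cdist a b | a b. a \<in> A \<and> b \<in> A}"

definition ccont :: "(real \<Rightarrow> real) \<Rightarrow> bool" where
  "ccont f \<longleftrightarrow> (\<forall>x\<in>circle. \<forall>e>0. \<exists>d>0. \<forall>y\<in>circle.
       cdist x y < d \<longrightarrow> cdist (f x) (f y) < e)"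

definition HomS1 :: "(real \<Rightarrow> real) set" where
  "HomS1 = {f. f \<in> extensional circle \<and> bij_betw f circle circle \<and> ccont f
              \<and> ccont (inv_into circle f)}"

definition hdist :: "(real \<Rightarrow> real) \<Rightarrow> (real \<Rightarrow> real) \<Rightarrow> real" where
  "hdist f g = Sup {cdist (f x) (g x) | x. x \<in> circle}"

definition hopen :: "(real \<Rightarrow> real) set \<Rightarrow> bool" where
  "hopen U \<longleftrightarrow> U \<subseteq> HomS1 \<and>
     (\<forall>f\<in>U. \<exists>e>0. \<forall>g\<in>HomS1. hdist f g < e \<longrightarrow> g \<in> U)"

definition borel_HomS1 :: "(real \<Rightarrow> real) set set" where
  "borel_HomS1 = sigma_sets HomS1 {U. hopen U}"

definition support :: "(real \<Rightarrow> real) measure \<Rightarrow> (real \<Rightarrow> real) set" where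
  "support \<nu> = {f \<in> HomS1. \<forall>U. hopen U \<and> f \<in> U \<longrightarrow> emeasure \<nu> U > 0}"

inductive_set gen_semigroup :: "(real \<Rightarrow> real) set \<Rightarrow> (real \<Rightarrow> real) set"
  for X where
  base: "f \<in> X \<Longrightarrow> f \<in> gen_semigroup X"
| comp: "f \<in> gen_semigroup X \<Longrightarrow> g \<in> gen_semigroup X \<Longrightarrow>
           restrict (f \<circ> g) circle \<in> gen_semigroup X"

definition proximal :: "(real \<Rightarrow> real) set \<Rightarrow> bool" where
  "proximal G \<longleftrightarrow> (\<forall>x\<in>circle. \<forall>y\<in>circle. \<exists>g::nat \<Rightarrow> real \<Rightarrow> real.
      (\<forall>n. g n \<in> G) \<and> (\<lambda>n. cdist (g n x) (g n y)) \<longlonglongrightarrow> 0)"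

definition fixes_point :: "(real \<Rightarrow> real) set \<Rightarrow> bool" where
  "fixes_point G \<longleftrightarrow> (\<exists>x\<in>circle. \<forall>f\<in>G. f x = x)"

text \<open>Random walk: f^n_omega = f_n o ... o f_1, where f_(k+1) = omega k.\<close>

primrec itc :: "(nat \<Rightarrow> real \<Rightarrow> real) \<Rightarrow> nat \<Rightarrow> real \<Rightarrow> real" where
  "itc \<omega> 0 x = x"
| "itc \<omega> (Suc n) x = \<omega> n (itc \<omega> n x)"

text \<open>Closed arc [x,y] from x to y in the positive direction, and the open arc.\<close>

definition carc :: "real \<Rightarrow> real \<Rightarrow> real set" where
  "carc x y = (if x \<le> y then {x..y} else {x..<1} \<union> {0..y})"

definition oarc :: "real \<Rightarrow> real \<Rightarrow> real set" where
  "oarc x y = (if x < y then {x<..<y} else {x<..<1} \<union> {0..<y})"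

definition prod_measure :: "(real \<Rightarrow> real) measure \<Rightarrow> (nat \<Rightarrow> real \<Rightarrow> real) measure" where
  "prod_measure \<nu> = PiM UNIV (\<lambda>_::nat. \<nu>)"

definition local_contraction_rate :: "(real \<Rightarrow> real) measure \<Rightarrow> real \<Rightarrow> bool" where
  "local_contraction_rate \<nu> q \<longleftrightarrow> 0 < q \<and> q < 1 \<and>
     (\<forall>x\<in>circle. AE \<omega> in prod_measure \<nu>.
        \<exists>a\<in>circle. \<exists>b\<in>circle. a \<noteq> b \<and> x \<in> oarc a b \<and>
          (\<forall>n. cdiam (itc \<omega> n ` carc a b) \<le> q ^ n))"

end

theory Submission
  imports Defs
begin

lemma cdist_sym: "cdist x y = cdist y x"
  by (simp add: cdist_def abs_minus_commute)

lemma cdist_self[simp]: "cdist x x = 0"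
  by (simp add: cdist_def)

lemma cdist_le_half: "cdist x y \<le> 1/2"
  by (simp add: cdist_def min_def)

lemma cdist_nonneg: "x \<in> circle \<Longrightarrow> y \<in> circle \<Longrightarrow> 0 \<le> cdist x y"
  by (auto simp: cdist_def circle_def)

lemma cdist_eq0: "x \<in> circle \<Longrightarrow> y \<in> circle \<Longrightarrow> cdist x y = 0 \<longleftrightarrow> x = y"
  by (auto simp: cdist_def circle_def min_def split: if_splits)

lemma cdist_pos: "x \<in> circle \<Longrightarrow> y \<in> circle \<Longrightarrow> x \<noteq> y \<Longrightarrow> 0 < cdist x y"
  using cdist_nonneg cdist_eq0 by force

lemma cdist_triangle: "x \<in> circle \<Longrightarrow> y \<in> circle \<Longrightarrow> z \<in> circle \<Longrightarrow>
   cdist x z \<le> cdist x y + cdist y z"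
  unfolding cdist_def circle_def by (auto simp: min_def abs_if split: if_splits)

lemma cdist_le_abs: "cdist x y \<le> \<bar>x - y\<bar>"
  by (simp add: cdist_def)

lemma frac_circle[simp]: "frac s \<in> circle"
  by (simp add: circle_def frac_lt_1)

lemma frac_id: "x \<in> circle \<Longrightarrow> frac x = x"
  by (simp add: circle_def frac_eq)

lemma cdist_int_shift:
  assumes "u \<in> circle" "v \<in> circle"
  shows "cdist u v \<le> \<bar>u - v - of_int k\<bar>"
proof -
  consider "k = 0" | "k = 1" | "k = -1" | "k \<ge> 2" | "k \<le> -2" by linarith
  then show ?thesis
  proof cases
    case 4
    then have "real_of_int k \<ge> 2" by simp
    then show ?thesis using assms cdist_le_half[of u v] by (auto simp: circle_def)
  next
    case 5
    then have "real_of_int k \<le> -2" by simp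
    then show ?thesis using assms cdist_le_half[of u v] by (auto simp: circle_def)
  qed (use assms in \<open>auto simp: cdist_def circle_def\<close>)
qed

lemma cdist_frac: "cdist (frac s) (frac t) \<le> \<bar>s - t\<bar>"
proof -
  have "frac s - frac t - of_int (\<lfloor>t\<rfloor> - \<lfloor>s\<rfloor>) = s - t"
    by (simp add: frac_def)
  then show ?thesis using cdist_int_shift[of "frac s" "frac t" "\<lfloor>t\<rfloor> - \<lfloor>s\<rfloor>"] by simp
qed

lemma cdist_exists_int:
  assumes "u \<in> circle" "v \<in> circle"
  shows "\<exists>k::int. cdist u v = \<bar>u - v - of_int k\<bar> \<and> \<bar>k\<bar> \<le> 1"
proof (cases "\<bar>u - v\<bar> \<le> 1/2")
  case True
  then show ?thesis by (intro exI[of _ 0]) (auto simp: cdist_def)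
next
  case False
  show ?thesis
  proof (cases "u \<ge> v")
    case True
    then show ?thesis using False assms by (intro exI[of _ 1]) (auto simp: cdist_def circle_def)
  next
    case f2: False
    then show ?thesis using False assms by (intro exI[of _ "-1"]) (auto simp: cdist_def circle_def)
  qed
qed

definition arclen :: "real \<Rightarrow> real \<Rightarrow> real" where
  "arclen a b = (if a \<le> b then b - a else 1 + b - a)"

lemma arclen_bounds: "a \<in> circle \<Longrightarrow> b \<in> circle \<Longrightarrow> a \<noteq> b \<Longrightarrow> 0 < arclen a b \<and> arclen a b < 1"
  by (auto simp: arclen_def circle_def)

lemma frac_arclen: "a \<in> circle \<Longrightarrow> b \<in> circle \<Longrightarrow> frac (a + arclen a b) = b"
proof (cases "a \<le> b")
  case True
  assume "a \<in> circle" "b \<in> circle"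
  then show ?thesis using True by (simp add: arclen_def frac_id)
next
  case False
  assume ab: "a \<in> circle" "b \<in> circle"
  have "a + arclen a b = b + of_int 1" using False by (simp add: arclen_def)
  then have "frac (a + arclen a b) = frac b" by (metis frac_add_of_int_right)
  then show ?thesis using ab by (simp add: frac_id)
qed

lemma floor_cases_interval:
  fixes s t :: real
  assumes "s \<le> t" "t < s + 1"
  shows "\<lfloor>t\<rfloor> = \<lfloor>s\<rfloor> \<or> \<lfloor>t\<rfloor> = \<lfloor>s\<rfloor> + 1"
proof -
  have "\<lfloor>s\<rfloor> \<le> \<lfloor>t\<rfloor>" using assms by (simp add: floor_mono)
  moreover have "\<lfloor>t\<rfloor> \<le> \<lfloor>s + 1\<rfloor>"
    using assms by (intro floor_mono) simp
  then have "\<lfloor>t\<rfloor> \<le> \<lfloor>s\<rfloor> + 1" by simp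
  ultimately show ?thesis by linarith
qed

lemma frac_in_cases:
  fixes r :: real and n :: int
  assumes "of_int n \<le> r" "r < of_int n + 1"
  shows "frac r = r - of_int n"
proof -
  have "\<lfloor>r\<rfloor> = n" using assms by (simp add: floor_eq_iff)
  then show ?thesis by (simp add: frac_def)
qed

lemma carc_frac:
  fixes s t :: real
  assumes st: "s \<le> t" "t < s + 1"
  shows "carc (frac s) (frac t) = frac ` {s..t}"
proof -
  define n where "n = \<lfloor>s\<rfloor>"
  have fs: "frac s = s - n" by (simp add: n_def frac_def)
  have sn: "of_int n \<le> s" "s < of_int n + 1" by (auto simp: n_def)
  consider "\<lfloor>t\<rfloor> = n" | "\<lfloor>t\<rfloor> = n + 1" using floor_cases_interval[OF st] n_def by blast
  then show ?thesis
  proof cases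
    case 1
    have ft: "frac t = t - n" by (simp add: 1 frac_def)
    have le: "frac s \<le> frac t" using fs ft st by simp
    have "frac ` {s..t} = {s - n .. t - n}"
    proof
      show "frac ` {s..t} \<subseteq> {s - n .. t - n}"
      proof
        fix z assume "z \<in> frac ` {s..t}"
        then obtain r where r: "r \<in> {s..t}" "z = frac r" by auto
        have "of_int n \<le> r" "r < of_int n + 1" using r sn st 1 by (auto, linarith)
        then have "frac r = r - n" by (rule frac_in_cases)
        then show "z \<in> {s - n .. t - n}" using r by auto
      qed
    next
      show "{s - n .. t - n} \<subseteq> frac ` {s..t}"
      proof
        fix z assume z: "z \<in> {s - n .. t - n}"
        have "of_int n \<le> z + n" "z + n < of_int n + 1" using z sn st 1 by (auto, linarith)
        then have "frac (z + n) = z" using frac_in_cases by force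
        moreover have "z + n \<in> {s..t}" using z by auto
        ultimately show "z \<in> frac ` {s..t}" by (metis image_eqI)
      qed
    qed
    then show ?thesis using le fs ft by (simp add: carc_def)
  next
    case 2
    have ft: "frac t = t - n - 1" by (simp add: 2 frac_def)
    have nle: "\<not> frac s \<le> frac t" using fs ft st by simp
    have "frac ` {s..t} = {s - n..<1} \<union> {0..t - n - 1}"
    proof
      show "frac ` {s..t} \<subseteq> {s - n..<1} \<union> {0..t - n - 1}"
      proof
        fix z assume "z \<in> frac ` {s..t}"
        then obtain r where r: "r \<in> {s..t}" "z = frac r" by auto
        show "z \<in> {s - n..<1} \<union> {0..t - n - 1}"
        proof (cases "r < of_int n + 1")
          case True
          have "of_int n \<le> r" using r sn by auto
          then have "frac r = r - n" using True by (rule frac_in_cases)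
          then show ?thesis using r True by auto
        next
          case False
          have "t < of_int (\<lfloor>t\<rfloor> + 1)" using floor_correct[of t] by blast
          then have "r < of_int (n + 1) + 1" using r 2 by simp
          then have "frac r = r - of_int (n+1)" using False by (intro frac_in_cases) auto
          then show ?thesis using r False by auto
        qed
      qed
    next
      show "{s - n..<1} \<union> {0..t - n - 1} \<subseteq> frac ` {s..t}"
      proof
        fix z assume z: "z \<in> {s - n..<1} \<union> {0..t - n - 1}"
        show "z \<in> frac ` {s..t}"
        proof (cases "z \<in> {s - n..<1}")
          case True
          have "frac (z + n) = z" using True sn frac_in_cases[of n "z + n"] by auto
          moreover have "z + n \<in> {s..t}"
          proof -
            have "of_int \<lfloor>t\<rfloor> \<le> t" by (rule of_int_floor_le)
            then show ?thesis using True 2 by simp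
          qed
          ultimately show ?thesis by (metis image_eqI)
        next
          case False
          then have z2: "z \<in> {0..t - n - 1}" using z by auto
          have "t - n - 1 < 1" using ft frac_lt_1[of t] by simp
          then have "frac (z + of_int (n+1)) = z" using z2 frac_in_cases[of "n+1" "z + of_int (n+1)"] by auto
          moreover have "z + of_int (n+1) \<in> {s..t}" using z2 sn by auto
          ultimately show ?thesis by (metis image_eqI)
        qed
      qed
    qed
    then show ?thesis using nle fs ft by (simp add: carc_def)
  qed
qed

lemma frac_eq_imp_int: "frac (r::real) = frac r' \<Longrightarrow> r = r' + of_int (\<lfloor>r\<rfloor> - \<lfloor>r'\<rfloor>)"
  by (simp add: frac_def)

lemma frac_inj_interval:
  fixes r r' s :: real
  assumes "r \<in> {s..<s+1}" "r' \<in> {s..<s+1}" "frac r = frac r'"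
  shows "r = r'"
proof -
  define k where "k = \<lfloor>r\<rfloor> - \<lfloor>r'\<rfloor>"
  have e: "r = r' + of_int k" using frac_eq_imp_int[OF assms(3)] k_def by simp
  have "\<bar>r - r'\<bar> < 1" using assms(1,2) by auto
  then have "\<bar>real_of_int k\<bar> < 1" using e by simp
  then have "k = 0" by linarith
  then show ?thesis using e by simp
qed

lemma carc_sub_circle: "carc a b \<subseteq> circle" if "a \<in> circle" "b \<in> circle"
  using that by (auto simp: carc_def circle_def)

lemma oarc_sub_circle: "oarc a b \<subseteq> circle" if "a \<in> circle" "b \<in> circle"
  using that by (auto simp: oarc_def circle_def)

lemma carc_oarc: "a \<in> circle \<Longrightarrow> b \<in> circle \<Longrightarrow> a \<noteq> b \<Longrightarrow> carc a b = oarc a b \<union> {a, b}"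
  by (auto simp: carc_def oarc_def circle_def)

lemma oarc_not_end: "a \<notin> oarc a b" "b \<notin> oarc a b"
  by (auto simp: oarc_def)

lemma oarc_disj: "a \<in> circle \<Longrightarrow> b \<in> circle \<Longrightarrow> a \<noteq> b \<Longrightarrow> oarc a b \<inter> oarc b a = {}"
  by (auto simp: oarc_def circle_def)

lemma oarc_cover: "a \<in> circle \<Longrightarrow> b \<in> circle \<Longrightarrow> a \<noteq> b \<Longrightarrow> circle = oarc a b \<union> oarc b a \<union> {a, b}"
  by (auto simp: oarc_def circle_def)

lemma oarc_frac:
  fixes s t :: real
  assumes st: "s < t" "t < s + 1"
  shows "oarc (frac s) (frac t) = frac ` {s<..<t}"
proof -
  have ne: "frac s \<noteq> frac t"
    using frac_inj_interval[of s s t] st by auto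
  have "oarc (frac s) (frac t) = carc (frac s) (frac t) - {frac s, frac t}"
    using carc_oarc[OF frac_circle frac_circle ne] oarc_not_end by auto
  also have "\<dots> = frac ` {s..t} - {frac s, frac t}" using carc_frac st by simp
  also have "\<dots> = frac ` {s<..<t}"
  proof
    show "frac ` {s..t} - {frac s, frac t} \<subseteq> frac ` {s<..<t}"
    proof
      fix z assume "z \<in> frac ` {s..t} - {frac s, frac t}"
      then obtain r where "r \<in> {s..t}" "z = frac r" "z \<noteq> frac s" "z \<noteq> frac t" by auto
      then show "z \<in> frac ` {s<..<t}" by (metis atLeastAtMost_iff greaterThanLessThan_iff image_eqI order_less_le)
    qed
  next
    show "frac ` {s<..<t} \<subseteq> frac ` {s..t} - {frac s, frac t}"
    proof
      fix z assume "z \<in> frac ` {s<..<t}"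
      then obtain r where r: "r \<in> {s<..<t}" "z = frac r" by auto
      have "frac r \<noteq> frac s" using frac_inj_interval[of r s s] r st by auto
      moreover have "frac r \<noteq> frac t" using frac_inj_interval[of r s t] r st by auto
      ultimately show "z \<in> frac ` {s..t} - {frac s, frac t}" using r by auto
    qed
  qed
  finally show ?thesis .
qed

lemma carc_lift: "a \<in> circle \<Longrightarrow> b \<in> circle \<Longrightarrow> a \<noteq> b \<Longrightarrow> carc a b = frac ` {a..a + arclen a b}"
  using carc_frac[of a "a + arclen a b"] arclen_bounds[of a b] frac_arclen[of a b] frac_id[of a] by simp

lemma oarc_lift: "a \<in> circle \<Longrightarrow> b \<in> circle \<Longrightarrow> a \<noteq> b \<Longrightarrow> oarc a b = frac ` {a<..<a + arclen a b}"
  using oarc_frac[of a "a + arclen a b"] arclen_bounds[of a b] frac_arclen[of a b] frac_id[of a] by simp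

lemma oarc_nonempty: "a \<in> circle \<Longrightarrow> b \<in> circle \<Longrightarrow> a \<noteq> b \<Longrightarrow> oarc a b \<noteq> {}"
  using oarc_lift[of a b] arclen_bounds[of a b] by auto

lemma cdist_lift:
  assumes "t \<in> circle" "t' \<in> circle"
  shows "\<exists>\<delta>. \<bar>\<delta>\<bar> = cdist t t' \<and> t' = frac (t + \<delta>)"
proof -
  obtain k :: int where k: "cdist t t' = \<bar>t - t' - of_int k\<bar>"
    using cdist_exists_int[OF assms] by blast
  have "frac (t + (t' - t + of_int k)) = t'"
    using frac_id[OF assms(2)] by simp
  moreover have "\<bar>t' - t + of_int k\<bar> = cdist t t'" using k by linarith
  ultimately show ?thesis by metis
qed

lemma frac_shift_same: "frac (frac s + d) = frac (s + d)"
  by (metis add.commute frac_add_simps(2))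

lemma oarc_open:
  assumes a: "a \<in> circle" and b: "b \<in> circle" and ab: "a \<noteq> b" and t: "t \<in> oarc a b"
  shows "\<exists>\<rho>>0. \<forall>t'\<in>circle. cdist t t' < \<rho> \<longrightarrow> t' \<in> oarc a b"
proof -
  define L where "L = arclen a b"
  obtain s where s: "s \<in> {a<..<a+L}" "t = frac s" using t oarc_lift[OF a b ab] L_def by auto
  define \<rho> where "\<rho> = min (s - a) (a + L - s)"
  have "\<rho> > 0" using s \<rho>_def by auto
  moreover have "t' \<in> oarc a b" if t': "t' \<in> circle" "cdist t t' < \<rho>" for t'
  proof -
    have tc: "t \<in> circle" using s by simp
    obtain d where d: "\<bar>d\<bar> = cdist t t'" "t' = frac (t + d)" using cdist_lift[OF tc t'(1)] by blast
    have "t' = frac (s + d)" using d s frac_shift_same by simp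
    moreover have "s + d \<in> {a<..<a+L}" using d t' \<rho>_def s by auto
    ultimately show ?thesis using oarc_lift[OF a b ab] L_def by auto
  qed
  ultimately show ?thesis by blast
qed

definition cb :: "real \<Rightarrow> real \<Rightarrow> real set" where
  "cb w \<rho> = {t \<in> circle. cdist w t \<le> \<rho>}"

lemma short_arc:
  assumes w: "w \<in> circle" and u: "u \<in> circle" and v: "v \<in> circle" and uv: "u \<noteq> v"
    and du: "cdist w u \<le> \<rho>" and dv: "cdist w v \<le> \<rho>" and rho: "\<rho> < 1/2"
  shows "carc u v \<subseteq> cb w \<rho> \<or> carc v u \<subseteq> cb w \<rho>"
proof -
  obtain \<alpha> where al: "\<bar>\<alpha>\<bar> = cdist w u" "u = frac (w + \<alpha>)" using cdist_lift[OF w u] by blast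
  obtain \<beta> where be: "\<bar>\<beta>\<bar> = cdist w v" "v = frac (w + \<beta>)" using cdist_lift[OF w v] by blast
  have sub: "carc (frac (w + x)) (frac (w + y)) \<subseteq> cb w \<rho>" if "x \<le> y" "\<bar>x\<bar> \<le> \<rho>" "\<bar>y\<bar> \<le> \<rho>" for x y
  proof -
    have "carc (frac (w + x)) (frac (w + y)) = frac ` {w + x .. w + y}"
      using that rho by (intro carc_frac) auto
    also have "\<dots> \<subseteq> cb w \<rho>"
    proof
      fix z assume "z \<in> frac ` {w + x .. w + y}"
      then obtain r where r: "r \<in> {w + x .. w + y}" "z = frac r" by auto
      have "cdist w z = cdist (frac w) (frac r)" using frac_id[OF w] r by simp
      also have "\<dots> \<le> \<bar>w - r\<bar>" by (rule cdist_frac)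
      also have "\<dots> \<le> \<rho>" using r that by auto
      finally show "z \<in> cb w \<rho>" using r by (simp add: cb_def)
    qed
    finally show ?thesis .
  qed
  show ?thesis
  proof (cases "\<alpha> \<le> \<beta>")
    case True
    then show ?thesis using sub[of \<alpha> \<beta>] al be du dv by auto
  next
    case False
    then show ?thesis using sub[of \<beta> \<alpha>] al be du dv by auto
  qed
qed

definition ucont :: "(real \<Rightarrow> real) \<Rightarrow> bool" where
  "ucont f \<longleftrightarrow> (\<forall>e>0. \<exists>d>0. \<forall>a\<in>circle. \<forall>b\<in>circle. cdist a b < d \<longrightarrow> cdist (f a) (f b) < e)"

definition mapsc :: "(real \<Rightarrow> real) \<Rightarrow> bool" where
  "mapsc f \<longleftrightarrow> (\<forall>a\<in>circle. f a \<in> circle)"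

lemma HomS1_mapsc: "f \<in> HomS1 \<Longrightarrow> mapsc f"
  by (auto simp: HomS1_def mapsc_def bij_betw_def)

lemma HomS1_inj: "f \<in> HomS1 \<Longrightarrow> inj_on f circle"
  by (auto simp: HomS1_def bij_betw_def)

lemma HomS1_surj: "f \<in> HomS1 \<Longrightarrow> f ` circle = circle"
  by (auto simp: HomS1_def bij_betw_def)

lemma HomS1_ccont: "f \<in> HomS1 \<Longrightarrow> ccont f"
  by (auto simp: HomS1_def)

lemma seq_circle:
  fixes a :: "nat \<Rightarrow> real"
  assumes "\<And>n. a n \<in> circle"
  shows "\<exists>l\<in>circle. \<exists>r. strict_mono r \<and> (\<lambda>n. cdist (a (r n)) l) \<longlonglongrightarrow> 0"
proof -
  have sc: "seq_compact {0..1::real}" by (rule compact_imp_seq_compact) simp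
  have an: "\<forall>n. a n \<in> {0..1::real}"
  proof
    fix n
    have "a n \<in> {0..<1}" using assms[of n] by (simp add: circle_def)
    then show "a n \<in> {0..1}" by simp
  qed
  obtain l' r where l': "l' \<in> {0..1}" "strict_mono r" "(a \<circ> r) \<longlonglongrightarrow> l'"
    by (rule seq_compactE[OF sc an])
  have lim: "(\<lambda>n. \<bar>a (r n) - l'\<bar>) \<longlonglongrightarrow> 0"
    using l'(3) by (intro tendsto_rabs_zero) (simp add: LIM_zero o_def)
  have "(\<lambda>n. cdist (a (r n)) (frac l')) \<longlonglongrightarrow> 0"
  proof (rule Lim_null_comparison[OF _ lim])
    show "\<forall>\<^sub>F n in sequentially. norm (cdist (a (r n)) (frac l')) \<le> \<bar>a (r n) - l'\<bar>"
    proof (intro always_eventually allI)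
      fix n
      have "cdist (a (r n)) (frac l') = cdist (frac (a (r n))) (frac l')"
        using frac_id[OF assms[of "r n"]] by simp
      also have "\<dots> \<le> \<bar>a (r n) - l'\<bar>" by (rule cdist_frac)
      finally show "norm (cdist (a (r n)) (frac l')) \<le> \<bar>a (r n) - l'\<bar>"
        using cdist_nonneg[OF assms[of "r n"] frac_circle] by simp
    qed
  qed
  then show ?thesis using l' frac_circle by blast
qed

lemma heine_cantor:
  assumes c: "ccont f" and m: "mapsc f"
  shows "ucont f"
proof (rule ccontr)
  assume "\<not> ucont f"
  then obtain e where e: "e > 0" and
    H: "\<forall>d>0. \<exists>a\<in>circle. \<exists>b\<in>circle. cdist a b < d \<and> \<not> cdist (f a) (f b) < e"
    unfolding ucont_def by blast
  have "\<forall>n. \<exists>p. fst p \<in> circle \<and> snd p \<in> circle \<and> cdist (fst p) (snd p) < 1 / (real n + 1) \<and> \<not> cdist (f (fst p)) (f (snd p)) < e"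
  proof
    fix n
    have "(1 / (real n + 1)) > 0" by simp
    then obtain a b where "a\<in>circle" "b\<in>circle" "cdist a b < 1 / (real n + 1)" "\<not> cdist (f a) (f b) < e"
      using H by blast
    then show "\<exists>p. fst p \<in> circle \<and> snd p \<in> circle \<and> cdist (fst p) (snd p) < 1 / (real n + 1) \<and> \<not> cdist (f (fst p)) (f (snd p)) < e"
      by (intro exI[of _ "(a,b)"]) simp
  qed
  from choice[OF this] obtain P where P0: "\<forall>n. fst (P n) \<in> circle \<and> snd (P n) \<in> circle \<and> cdist (fst (P n)) (snd (P n)) < 1 / (real n + 1) \<and> \<not> cdist (f (fst (P n))) (f (snd (P n))) < e"
    by blast
  then have P: "\<And>n. fst (P n) \<in> circle" "\<And>n. snd (P n) \<in> circle"
     "\<And>n. cdist (fst (P n)) (snd (P n)) < 1 / (real n + 1)" "\<And>n. \<not> cdist (f (fst (P n))) (f (snd (P n))) < e"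
    by auto
  define A where "A n = fst (P n)" for n
  define B where "B n = snd (P n)" for n
  have Ac0: "\<And>n. A n \<in> circle" using P(1) by (simp add: A_def)
  obtain l r where l: "l \<in> circle" "strict_mono r" "(\<lambda>n. cdist (A (r n)) l) \<longlonglongrightarrow> 0"
    using seq_circle[of A, OF Ac0] by blast
  have e2: "e/2 > 0" using e by simp
  obtain d where d: "d > 0" "\<forall>y\<in>circle. cdist l y < d \<longrightarrow> cdist (f l) (f y) < e/2"
    using c l(1) e2 unfolding ccont_def by blast
  have "\<forall>\<^sub>F n in sequentially. cdist (A (r n)) l < d/2"
  proof -
    have "(0::real) < d/2" using d(1) by simp
    from order_tendstoD(2)[OF l(3) this] show ?thesis .
  qed
  then obtain N1 where N1: "\<forall>n\<ge>N1. cdist (A (r n)) l < d/2"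
    unfolding eventually_sequentially by blast
  obtain N2 where "inverse (real (Suc N2)) < d/2"
    using reals_Archimedean[of "d/2"] d(1) by auto
  then have N2: "1 / (real N2 + 1) < d/2" by (simp add: inverse_eq_divide add.commute)
  define n where "n = max N1 N2"
  have rn: "r n \<ge> N2" using seq_suble[OF l(2), of n] n_def by simp
  have "1 / (real (r n) + 1) \<le> 1 / (real N2 + 1)"
    using rn by (intro divide_left_mono) auto
  then have dAB: "cdist (A (r n)) (B (r n)) < d/2" using P(3)[of "r n"] N2 A_def B_def by simp
  have Ac: "A (r n) \<in> circle" and Bc: "B (r n) \<in> circle" using P A_def B_def by auto
  have "n \<ge> N1" by (simp add: n_def)
  then have dA: "cdist l (A (r n)) < d/2" using N1 cdist_sym[of l "A (r n)"] by simp
  have dA': "cdist l (A (r n)) < d" using dA d(1) by simp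
  have dB: "cdist l (B (r n)) < d"
    using cdist_triangle[OF l(1) Ac Bc] dA dAB by simp
  have "cdist (f (A (r n))) (f (B (r n))) \<le> cdist (f (A (r n))) (f l) + cdist (f l) (f (B (r n)))"
    using m Ac Bc l(1) by (intro cdist_triangle) (auto simp: mapsc_def)
  also have "\<dots> < e/2 + e/2"
  proof (rule add_strict_mono)
    show "cdist (f (A (r n))) (f l) < e/2" using d(2) Ac dA' cdist_sym[of "f (A (r n))" "f l"] by simp
    show "cdist (f l) (f (B (r n))) < e/2" using d(2) Bc dB by simp
  qed
  finally have "cdist (f (A (r n))) (f (B (r n))) < e" by simp
  moreover have "\<not> cdist (f (A (r n))) (f (B (r n))) < e" using P(4)[of "r n"] unfolding A_def B_def .
  ultimately show False by blast
qed

lemma HomS1_ucont: "f \<in> HomS1 \<Longrightarrow> ucont f"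
  by (rule heine_cantor[OF HomS1_ccont HomS1_mapsc])

lemma ucont_comp:
  assumes f: "ucont f" and g: "ucont g" and m: "mapsc g"
  shows "ucont (\<lambda>x. f (g x))"
  unfolding ucont_def
proof (intro allI impI)
  fix e :: real assume "e > 0"
  then obtain d where d: "d > 0" "\<forall>a\<in>circle. \<forall>b\<in>circle. cdist a b < d \<longrightarrow> cdist (f a) (f b) < e"
    using f unfolding ucont_def by blast
  then obtain d' where d': "d' > 0" "\<forall>a\<in>circle. \<forall>b\<in>circle. cdist a b < d' \<longrightarrow> cdist (g a) (g b) < d"
    using g unfolding ucont_def by blast
  show "\<exists>d>0. \<forall>a\<in>circle. \<forall>b\<in>circle. cdist a b < d \<longrightarrow> cdist (f (g a)) (f (g b)) < e"
    using d d' m unfolding mapsc_def by blast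
qed

lemma ucont_ccont: "ucont f \<Longrightarrow> ccont f"
  unfolding ucont_def ccont_def by blast

lemma arc_image_side:
  fixes f :: "real \<Rightarrow> real"
  assumes m: "mapsc f" and inj: "inj_on f circle" and c: "ccont f"
    and a: "a \<in> circle" and b: "b \<in> circle" and ab: "a \<noteq> b"
  shows "f ` oarc a b \<subseteq> oarc (f a) (f b) \<or> f ` oarc a b \<subseteq> oarc (f b) (f a)"
proof -
  have fa: "f a \<in> circle" and fb: "f b \<in> circle" using m a b by (auto simp: mapsc_def)
  have fab: "f a \<noteq> f b" using inj a b ab by (meson inj_on_contraD)
  define I where "I = {a<..<a + arclen a b}"
  have oI: "oarc a b = frac ` I" using oarc_lift[OF a b ab] I_def by simp
  define O1 where "O1 = oarc (f a) (f b)"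
  define O2 where "O2 = oarc (f b) (f a)"
  define U where "U = {s. frac s \<in> oarc a b \<and> f (frac s) \<in> O1}"
  define V where "V = {s. frac s \<in> oarc a b \<and> f (frac s) \<in> O2}"
  have opn: "open {s. frac s \<in> oarc a b \<and> f (frac s) \<in> oarc p q}"
    if p: "p \<in> circle" and q: "q \<in> circle" and pq: "p \<noteq> q" for p q
    unfolding open_dist
  proof (intro ballI)
    fix s assume "s \<in> {s. frac s \<in> oarc a b \<and> f (frac s) \<in> oarc p q}"
    then have s1: "frac s \<in> oarc a b" and s2: "f (frac s) \<in> oarc p q" by auto
    obtain r1 where r1: "r1 > 0" "\<forall>t'\<in>circle. cdist (frac s) t' < r1 \<longrightarrow> t' \<in> oarc a b"
      using oarc_open[OF a b ab s1] by blast
    obtain r2 where r2: "r2 > 0" "\<forall>t'\<in>circle. cdist (f (frac s)) t' < r2 \<longrightarrow> t' \<in> oarc p q"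
      using oarc_open[OF p q pq s2] by blast
    obtain d where d: "d > 0" "\<forall>y\<in>circle. cdist (frac s) y < d \<longrightarrow> cdist (f (frac s)) (f y) < r2"
      using c r2(1) frac_circle[of s] unfolding ccont_def by blast
    show "\<exists>e>0. \<forall>y. dist y s < e \<longrightarrow> y \<in> {s. frac s \<in> oarc a b \<and> f (frac s) \<in> oarc p q}"
    proof (intro exI[of _ "min r1 d"] conjI allI impI)
      show "min r1 d > 0" using r1 d by simp
      fix y assume "dist y s < min r1 d"
      then have "cdist (frac s) (frac y) < min r1 d"
        using cdist_frac[of s y] by (simp add: dist_real_def abs_minus_commute)
      then have "frac y \<in> oarc a b" "f (frac y) \<in> oarc p q"
        using r1 r2 d m frac_circle[of y] by (auto simp: mapsc_def)
      then show "y \<in> {s. frac s \<in> oarc a b \<and> f (frac s) \<in> oarc p q}" by simp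
    qed
  qed
  have oU: "open U" unfolding U_def O1_def by (rule opn[OF fa fb fab])
  have oV: "open V" unfolding V_def O2_def by (rule opn[OF fb fa fab[symmetric]])
  have img: "f t \<in> O1 \<union> O2" if t: "t \<in> oarc a b" for t
  proof -
    have tc: "t \<in> circle" using t oarc_sub_circle[OF a b] by auto
    have "t \<noteq> a" "t \<noteq> b" using t oarc_not_end by auto
    then have "f t \<noteq> f a" "f t \<noteq> f b" using inj tc a b by (auto dest: inj_onD)
    moreover have "f t \<in> circle" using m tc by (simp add: mapsc_def)
    ultimately show ?thesis using oarc_cover[OF fa fb fab] O1_def O2_def by blast
  qed
  have cov: "I \<subseteq> U \<union> V"
  proof
    fix s assume "s \<in> I"
    then have "frac s \<in> oarc a b" using oI by auto
    then show "s \<in> U \<union> V" using img[of "frac s"] U_def V_def by auto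
  qed
  have dis: "U \<inter> V \<inter> I = {}"
    using oarc_disj[OF fa fb fab] U_def V_def O1_def O2_def by auto
  have "connected I" unfolding I_def by simp
  then have "U \<inter> I = {} \<or> V \<inter> I = {}" using connectedD[OF _ oU oV dis cov] by blast
  then show ?thesis
  proof
    assume UI: "U \<inter> I = {}"
    have "f ` oarc a b \<subseteq> O2"
    proof
      fix z assume "z \<in> f ` oarc a b"
      then obtain s where s: "s \<in> I" "z = f (frac s)" using oI by auto
      have "frac s \<in> oarc a b" using s oI by auto
      moreover have "s \<notin> U" using UI s by auto
      ultimately show "z \<in> O2" using img[of "frac s"] s U_def by auto
    qed
    then show ?thesis using O2_def by blast
  next
    assume VI: "V \<inter> I = {}"
    have "f ` oarc a b \<subseteq> O1"
    proof
      fix z assume "z \<in> f ` oarc a b"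
      then obtain s where s: "s \<in> I" "z = f (frac s)" using oI by auto
      have "frac s \<in> oarc a b" using s oI by auto
      moreover have "s \<notin> V" using VI s by auto
      ultimately show "z \<in> O1" using img[of "frac s"] s V_def by auto
    qed
    then show ?thesis using O1_def by blast
  qed
qed

lemma arc_image_helper:
  fixes f :: "real \<Rightarrow> real"
  assumes m: "mapsc f" and inj: "inj_on f circle" and sur: "f ` circle = circle"
    and a: "a \<in> circle" and b: "b \<in> circle" and ab: "a \<noteq> b"
    and PQ: "P \<inter> Q = {}" "circle = P \<union> Q \<union> {f a, f b}" "f a \<notin> P" "f b \<notin> P"
       "f a \<notin> Q" "f b \<notin> Q" "Q \<noteq> {}"
    and s1: "f ` oarc a b \<subseteq> P" and s2: "f ` oarc b a \<subseteq> P \<or> f ` oarc b a \<subseteq> Q"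
  shows "f ` oarc a b = P"
proof -
  have cov: "circle = oarc a b \<union> oarc b a \<union> {a, b}" by (rule oarc_cover[OF a b ab])
  have s2': "f ` oarc b a \<subseteq> Q"
  proof (rule ccontr)
    assume "\<not> f ` oarc b a \<subseteq> Q"
    then have s3: "f ` oarc b a \<subseteq> P" using s2 by blast
    obtain w where w: "w \<in> Q" using PQ(7) by blast
    then have "w \<in> circle" using PQ(2) by blast
    then obtain t where t: "t \<in> circle" "w = f t" using sur by blast
    have "t \<in> oarc a b \<union> oarc b a \<union> {a, b}" using cov t by blast
    then have "w \<in> P \<or> w = f a \<or> w = f b" using s1 s3 t by blast
    then show False using w PQ by blast
  qed
  show ?thesis
  proof
    show "f ` oarc a b \<subseteq> P" by (rule s1)
    show "P \<subseteq> f ` oarc a b"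
    proof
      fix w assume w: "w \<in> P"
      then have "w \<in> circle" using PQ(2) by blast
      then obtain t where t: "t \<in> circle" "w = f t" using sur by blast
      have "t \<noteq> a" "t \<noteq> b" using w t PQ by auto
      moreover have "t \<notin> oarc b a" using s2' w t PQ(1) by blast
      ultimately have "t \<in> oarc a b" using cov t by blast
      then show "w \<in> f ` oarc a b" using t by blast
    qed
  qed
qed

lemma arc_image:
  fixes f :: "real \<Rightarrow> real"
  assumes m: "mapsc f" and inj: "inj_on f circle" and sur: "f ` circle = circle" and c: "ccont f"
    and a: "a \<in> circle" and b: "b \<in> circle" and ab: "a \<noteq> b"
  shows "f ` carc a b = carc (f a) (f b) \<or> f ` carc a b = carc (f b) (f a)"
proof -
  have fa: "f a \<in> circle" and fb: "f b \<in> circle" using m a b by (auto simp: mapsc_def)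
  have fab: "f a \<noteq> f b" using inj a b ab by (meson inj_on_contraD)
  define O1 where "O1 = oarc (f a) (f b)"
  define O2 where "O2 = oarc (f b) (f a)"
  have d12: "O1 \<inter> O2 = {}" using oarc_disj[OF fa fb fab] O1_def O2_def by simp
  have c12: "circle = O1 \<union> O2 \<union> {f a, f b}" using oarc_cover[OF fa fb fab] O1_def O2_def by simp
  have e1: "f a \<notin> O1" "f b \<notin> O1" "f a \<notin> O2" "f b \<notin> O2" using oarc_not_end O1_def O2_def by auto
  have n1: "O1 \<noteq> {}" "O2 \<noteq> {}" using oarc_nonempty[OF fa fb fab] oarc_nonempty[OF fb fa fab[symmetric]] O1_def O2_def by auto
  have sa: "f ` oarc a b \<subseteq> O1 \<or> f ` oarc a b \<subseteq> O2"
    using arc_image_side[OF m inj c a b ab] O1_def O2_def by simp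
  have sb: "f ` oarc b a \<subseteq> O1 \<or> f ` oarc b a \<subseteq> O2"
    using arc_image_side[OF m inj c b a ab[symmetric]] O1_def O2_def by auto
  have ca: "carc a b = oarc a b \<union> {a, b}" by (rule carc_oarc[OF a b ab])
  from sa show ?thesis
  proof
    assume h: "f ` oarc a b \<subseteq> O1"
    have "f ` oarc a b = O1"
      by (rule arc_image_helper[OF m inj sur a b ab d12 c12 e1 n1(2) h]) (use sb in blast)
    then have "f ` carc a b = O1 \<union> {f a, f b}" using ca by auto
    then show ?thesis using carc_oarc[OF fa fb fab] O1_def by auto
  next
    assume h: "f ` oarc a b \<subseteq> O2"
    have d21: "O2 \<inter> O1 = {}" using d12 by blast
    have c21: "circle = O2 \<union> O1 \<union> {f a, f b}" using c12 by blast
    have "f ` oarc a b = O2"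
      by (rule arc_image_helper[OF m inj sur a b ab d21 c21 e1(3,4,1,2) n1(1) h]) (use sb in blast)
    then have "f ` carc a b = O2 \<union> {f b, f a}" using ca by auto
    then show ?thesis using carc_oarc[OF fb fa fab[symmetric]] O2_def by auto
  qed
qed

definition W :: "(nat \<Rightarrow> real \<Rightarrow> real) set" where
  "W = {\<omega>. \<forall>i. \<omega> i \<in> HomS1}"

definition shift :: "nat \<Rightarrow> (nat \<Rightarrow> 'a) \<Rightarrow> (nat \<Rightarrow> 'a)" where
  "shift T \<omega> = (\<lambda>i. \<omega> (i + T))"

lemma shift_W: "\<omega> \<in> W \<Longrightarrow> shift T \<omega> \<in> W"
  by (simp add: W_def shift_def)

lemma itc_add: "itc \<omega> (T + n) x = itc (shift T \<omega>) n (itc \<omega> T x)"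
  by (induction n) (simp_all add: shift_def add.commute)

lemma itc_dep: "(\<And>i. i < n \<Longrightarrow> \<omega> i = \<omega>' i) \<Longrightarrow> itc \<omega> n x = itc \<omega>' n x"
  by (induction n) auto

lemma itc_props:
  assumes "\<omega> \<in> W"
  shows "mapsc (itc \<omega> n) \<and> ucont (itc \<omega> n) \<and> inj_on (itc \<omega> n) circle \<and> itc \<omega> n ` circle = circle"
proof (induction n)
  case 0
  have "ucont (\<lambda>x. x)" unfolding ucont_def by blast
  then show ?case by (simp add: mapsc_def inj_on_def)
next
  case (Suc n)
  have h: "\<omega> n \<in> HomS1" using assms by (simp add: W_def)
  have eq: "itc \<omega> (Suc n) = (\<lambda>x. \<omega> n (itc \<omega> n x))" by (simp add: fun_eq_iff)
  have m0: "mapsc (itc \<omega> n)" using Suc by blast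
  have m: "mapsc (itc \<omega> (Suc n))"
    unfolding mapsc_def
  proof
    fix a assume "a \<in> circle"
    then have "itc \<omega> n a \<in> circle" using m0 unfolding mapsc_def by blast
    then show "itc \<omega> (Suc n) a \<in> circle" using HomS1_mapsc[OF h] unfolding mapsc_def by simp
  qed
  have u0: "ucont (itc \<omega> n)" using Suc by blast
  have u: "ucont (itc \<omega> (Suc n))" unfolding eq by (rule ucont_comp[OF HomS1_ucont[OF h] u0 m0])
  have i: "inj_on (itc \<omega> (Suc n)) circle"
  proof -
    have i0: "inj_on (itc \<omega> n) circle" and s0: "itc \<omega> n ` circle = circle" using Suc by blast+
    have "inj_on (\<omega> n \<circ> itc \<omega> n) circle"
      using HomS1_inj[OF h] i0 s0 by (intro comp_inj_on) auto
    then show ?thesis by (simp add: eq o_def)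
  qed
  have s: "itc \<omega> (Suc n) ` circle = circle"
  proof -
    have "itc \<omega> (Suc n) ` circle = \<omega> n ` (itc \<omega> n ` circle)" by (auto simp: eq)
    moreover have "itc \<omega> n ` circle = circle" using Suc by blast
    ultimately show ?thesis using HomS1_surj[OF h] by simp
  qed
  show ?case using m u i s by blast
qed

lemma itc_mapsc: "\<omega> \<in> W \<Longrightarrow> a \<in> circle \<Longrightarrow> itc \<omega> n a \<in> circle"
  using itc_props[of \<omega> n] by (simp add: mapsc_def)

lemma carc_neq:
  assumes x: "x \<in> circle" and y: "y \<in> circle" and xy: "x \<noteq> y"
  shows "\<exists>t\<in>carc x y. t \<notin> carc y x"
proof -
  obtain t where t: "t \<in> oarc x y" using oarc_nonempty[OF x y xy] by blast
  have "t \<in> carc x y" using t carc_oarc[OF x y xy] by auto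
  moreover have "t \<notin> carc y x"
  proof -
    have "x \<notin> oarc x y" "y \<notin> oarc x y" by (simp_all add: oarc_not_end)
    then show ?thesis using t carc_oarc[OF y x xy[symmetric]] oarc_disj[OF x y xy] by auto
  qed
  ultimately show ?thesis by blast
qed

lemma itc_arc:
  assumes w: "\<omega> \<in> W" and x: "x \<in> circle" and y: "y \<in> circle" and xy: "x \<noteq> y"
  shows "itc \<omega> n ` carc x y = carc (itc \<omega> n x) (itc \<omega> n y) \<or>
         itc \<omega> n ` carc x y = carc (itc \<omega> n y) (itc \<omega> n x)"
proof (induction n)
  case 0
  then show ?case by simp
next
  case (Suc n)
  let ?u = "itc \<omega> n x" and ?v = "itc \<omega> n y"
  have h: "\<omega> n \<in> HomS1" using w by (simp add: W_def)
  have u: "?u \<in> circle" and v: "?v \<in> circle" using itc_mapsc[OF w] x y by auto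
  have uv: "?u \<noteq> ?v" using itc_props[OF w, of n] x y xy by (auto dest: inj_onD)
  have ai: "\<And>a b. a \<in> circle \<Longrightarrow> b \<in> circle \<Longrightarrow> a \<noteq> b \<Longrightarrow>
     \<omega> n ` carc a b = carc (\<omega> n a) (\<omega> n b) \<or> \<omega> n ` carc a b = carc (\<omega> n b) (\<omega> n a)"
    using arc_image[OF HomS1_mapsc[OF h] HomS1_inj[OF h] HomS1_surj[OF h] HomS1_ccont[OF h]] by blast
  have eq: "itc \<omega> (Suc n) ` carc x y = \<omega> n ` (itc \<omega> n ` carc x y)" by auto
  from Suc show ?case
  proof
    assume "itc \<omega> n ` carc x y = carc ?u ?v"
    then show ?thesis using ai[OF u v uv] eq by auto
  next
    assume "itc \<omega> n ` carc x y = carc ?v ?u"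
    then show ?thesis using ai[OF v u uv[symmetric]] eq by auto
  qed
qed

lemma itc_arc_pair:
  assumes w: "\<omega> \<in> W" and x: "x \<in> circle" and y: "y \<in> circle" and xy: "x \<noteq> y"
    and A: "A = carc (itc \<omega> n x) (itc \<omega> n y) \<or> A = carc (itc \<omega> n y) (itc \<omega> n x)"
  shows "itc \<omega> n ` carc x y = A \<or> itc \<omega> n ` carc y x = A"
proof -
  let ?F = "itc \<omega> n"
  let ?u = "?F x" and ?v = "?F y"
  have u: "?u \<in> circle" and v: "?v \<in> circle" using itc_mapsc[OF w] x y by auto
  have uv: "?u \<noteq> ?v" using itc_props[OF w, of n] x y xy by (auto dest: inj_onD)
  have inj: "inj_on ?F circle" using itc_props[OF w] by blast
  have ne: "?F ` carc x y \<noteq> ?F ` carc y x"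
  proof
    assume eq: "?F ` carc x y = ?F ` carc y x"
    obtain t where t: "t \<in> carc x y" "t \<notin> carc y x" using carc_neq[OF x y xy] by blast
    have "?F t \<in> ?F ` carc y x" using t eq by blast
    then obtain t' where t': "t' \<in> carc y x" "?F t = ?F t'" by blast
    have "t \<in> circle" "t' \<in> circle" using t t' carc_sub_circle x y by auto
    then have "t = t'" using inj t' inj_onD by metis
    then show False using t t' by simp
  qed
  have cne: "carc ?u ?v \<noteq> carc ?v ?u"
    using carc_neq[OF u v uv] by auto
  have a1: "?F ` carc x y = carc ?u ?v \<or> ?F ` carc x y = carc ?v ?u" by (rule itc_arc[OF w x y xy])
  have a2: "?F ` carc y x = carc ?v ?u \<or> ?F ` carc y x = carc ?u ?v" by (rule itc_arc[OF w y x xy[symmetric]])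
  show ?thesis using a1 a2 ne cne A by metis
qed

definition gcond :: "real set \<Rightarrow> nat \<Rightarrow> real \<Rightarrow> real \<Rightarrow> bool" where
  "gcond S k a b \<longleftrightarrow> a \<in> circle \<and> b \<in> circle \<and>
     (\<exists>z\<in>S. cdist z a < 1 / (real k + 1) \<and> cdist z b < 1 / (real k + 1))"

definition good :: "real \<Rightarrow> (nat \<Rightarrow> real \<Rightarrow> real) \<Rightarrow> real set \<Rightarrow> bool" where
  "good q \<omega> S \<longleftrightarrow> (\<exists>C::nat. \<exists>k::nat. \<forall>ra::rat. \<forall>rb::rat. gcond S k (of_rat ra) (of_rat rb) \<longrightarrow>
      (\<forall>n. cdist (itc \<omega> n (of_rat ra)) (itc \<omega> n (of_rat rb)) \<le> real C * q ^ n))"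

definition goodfull :: "real \<Rightarrow> (nat \<Rightarrow> real \<Rightarrow> real) \<Rightarrow> real set \<Rightarrow> bool" where
  "goodfull q \<omega> S \<longleftrightarrow> (\<exists>C::nat. \<exists>k::nat. \<forall>a b. gcond S k a b \<longrightarrow>
      (\<forall>n. cdist (itc \<omega> n a) (itc \<omega> n b) \<le> real C * q ^ n))"

lemma good_mono: "good q \<omega> S' \<Longrightarrow> S \<subseteq> S' \<Longrightarrow> good q \<omega> S"
  unfolding good_def gcond_def by (meson subsetD)

lemma goodfull_mono: "goodfull q \<omega> S' \<Longrightarrow> S \<subseteq> S' \<Longrightarrow> goodfull q \<omega> S"
  unfolding goodfull_def gcond_def by (meson subsetD)

lemma goodfull_good: "goodfull q \<omega> S \<Longrightarrow> good q \<omega> S"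
  unfolding goodfull_def good_def by blast

lemma rat_dense_circle:
  assumes a: "a \<in> circle" and e: "e > 0"
  shows "\<exists>r::rat. of_rat r \<in> circle \<and> cdist a (of_rat r) < e"
proof -
  have "a < min (a + e) 1" using a e by (simp add: circle_def)
  then obtain r where r: "r \<in> \<rat>" "a < r" "r < min (a + e) 1" using Rats_dense_in_real by blast
  obtain r' where r': "r = of_rat r'" using r(1) Rats_cases by blast
  have "r \<in> circle" using a r by (simp add: circle_def)
  moreover have "cdist a r < e" using cdist_le_abs[of a r] r by simp
  ultimately show ?thesis using r' by blast
qed

lemma good_goodfull:
  assumes w: "\<omega> \<in> W" and g: "good q \<omega> S" and Sc: "S \<subseteq> circle"
  shows "goodfull q \<omega> S"
proof -
  obtain C k where Ck: "\<forall>ra::rat. \<forall>rb::rat. gcond S k (of_rat ra) (of_rat rb) \<longrightarrow>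
      (\<forall>n. cdist (itc \<omega> n (of_rat ra)) (itc \<omega> n (of_rat rb)) \<le> real C * q ^ n)"
    using g unfolding good_def by blast
  have "cdist (itc \<omega> n a) (itc \<omega> n b) \<le> real C * q ^ n" if gc: "gcond S k a b" for a b n
  proof (rule field_le_epsilon)
    fix e :: real assume e: "e > 0"
    let ?F = "itc \<omega> n"
    let ?\<rho> = "1 / (real k + 1)"
    obtain z where z: "z \<in> S" "cdist z a < ?\<rho>" "cdist z b < ?\<rho>" and a: "a \<in> circle" and b: "b \<in> circle"
      using gc unfolding gcond_def by blast
    have zc: "z \<in> circle" using z(1) Sc by blast
    obtain d where d: "d > 0" "\<forall>a\<in>circle. \<forall>b\<in>circle. cdist a b < d \<longrightarrow> cdist (?F a) (?F b) < e/2"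
      using itc_props[OF w, of n] e unfolding ucont_def by (meson half_gt_zero)
    define sl where "sl = min d (min (?\<rho> - cdist z a) (?\<rho> - cdist z b))"
    have sl: "sl > 0" using d z sl_def by simp
    obtain ra where ra: "of_rat ra \<in> circle" "cdist a (of_rat ra) < sl" using rat_dense_circle[OF a sl] by blast
    obtain rb where rb: "of_rat rb \<in> circle" "cdist b (of_rat rb) < sl" using rat_dense_circle[OF b sl] by blast
    have "gcond S k (of_rat ra) (of_rat rb)"
      unfolding gcond_def
    proof (intro conjI bexI[of _ z])
      show "of_rat ra \<in> circle" "of_rat rb \<in> circle" "z \<in> S" using ra rb z by auto
      show "cdist z (of_rat ra) < ?\<rho>"
        using cdist_triangle[OF zc a ra(1)] ra(2) sl_def by simp
      show "cdist z (of_rat rb) < ?\<rho>"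
        using cdist_triangle[OF zc b rb(1)] rb(2) sl_def by simp
    qed
    then have main: "cdist (?F (of_rat ra)) (?F (of_rat rb)) \<le> real C * q ^ n" using Ck by blast
    have Fa: "?F a \<in> circle" "?F b \<in> circle" "?F (of_rat ra) \<in> circle" "?F (of_rat rb) \<in> circle"
      using itc_mapsc[OF w] a b ra rb by auto
    have c1: "cdist (?F a) (?F (of_rat ra)) < e/2" using d a ra sl_def by simp
    have c2: "cdist (?F (of_rat rb)) (?F b) < e/2" using d b rb sl_def cdist_sym by (metis min.strict_boundedE)
    have "cdist (?F a) (?F b) \<le> cdist (?F a) (?F (of_rat ra)) + cdist (?F (of_rat ra)) (?F b)"
      using cdist_triangle Fa by blast
    also have "\<dots> \<le> cdist (?F a) (?F (of_rat ra)) + (cdist (?F (of_rat ra)) (?F (of_rat rb)) + cdist (?F (of_rat rb)) (?F b))"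
      using cdist_triangle Fa by simp
    also have "\<dots> \<le> real C * q ^ n + e" using c1 c2 main by simp
    finally show "cdist (?F a) (?F b) \<le> real C * q ^ n + e" .
  qed
  then show ?thesis unfolding goodfull_def by blast
qed

lemma shift_lemma:
  assumes w: "\<omega> \<in> W" and q: "0 < q" "q < 1"
    and g: "goodfull q (shift T \<omega>) (itc \<omega> T ` A)" and A: "A \<subseteq> circle"
  shows "goodfull q \<omega> A"
proof -
  obtain C k where Ck: "\<forall>a b. gcond (itc \<omega> T ` A) k a b \<longrightarrow>
      (\<forall>n. cdist (itc (shift T \<omega>) n a) (itc (shift T \<omega>) n b) \<le> real C * q ^ n)"
    using g unfolding goodfull_def by blast
  have "1 / (real k + 1) > 0" by simp
  then obtain d where d: "d > 0" "\<forall>a\<in>circle. \<forall>b\<in>circle. cdist a b < d \<longrightarrow> cdist (itc \<omega> T a) (itc \<omega> T b) < 1 / (real k + 1)"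
    using itc_props[OF w, of T] unfolding ucont_def by blast
  obtain k' where k': "inverse (real (Suc k')) < d" using reals_Archimedean[OF d(1)] by blast
  have k'': "1 / (real k' + 1) < d" using k' by (simp add: inverse_eq_divide add.commute)
  define C' where "C' = nat \<lceil>(real C + 1) / q ^ T\<rceil>"
  have C': "real C' \<ge> (real C + 1) / q ^ T" unfolding C'_def by linarith
  have qT: "q ^ T > 0" using q by simp
  have "cdist (itc \<omega> m a) (itc \<omega> m b) \<le> real C' * q ^ m" if gc: "gcond A k' a b" for a b m
  proof -
    obtain z where z: "z \<in> A" "cdist z a < 1 / (real k' + 1)" "cdist z b < 1 / (real k' + 1)"
      and a: "a \<in> circle" and b: "b \<in> circle" using gc unfolding gcond_def by blast
    have zc: "z \<in> circle" using z A by auto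
    have base: "real C' * q ^ m \<ge> (real C + 1) * q ^ m / q ^ T"
      using C' q by (simp add: divide_le_eq mult.commute mult_right_mono)
    show ?thesis
    proof (cases "T \<le> m")
      case True
      then obtain n where n: "m = T + n" using le_Suc_ex by blast
      have "gcond (itc \<omega> T ` A) k (itc \<omega> T a) (itc \<omega> T b)"
        unfolding gcond_def
      proof (intro conjI bexI[of _ "itc \<omega> T z"])
        show "itc \<omega> T a \<in> circle" "itc \<omega> T b \<in> circle" using itc_mapsc[OF w] a b by auto
        show "itc \<omega> T z \<in> itc \<omega> T ` A" using z by simp
        show "cdist (itc \<omega> T z) (itc \<omega> T a) < 1 / (real k + 1)" using d zc a z k'' by simp
        show "cdist (itc \<omega> T z) (itc \<omega> T b) < 1 / (real k + 1)" using d zc b z k'' by simp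
      qed
      then have "cdist (itc \<omega> m a) (itc \<omega> m b) \<le> real C * q ^ n"
        using Ck n itc_add by metis
      also have "\<dots> \<le> (real C + 1) * q ^ m / q ^ T"
        using qT q n by (simp add: power_add field_simps)
      finally show ?thesis using base by simp
    next
      case False
      have "q ^ m \<ge> q ^ T" using False q by (intro power_decreasing) auto
      have "(real C + 1) * q ^ m \<ge> 1 * q ^ m"
        using q by (intro mult_right_mono) auto
      then have "(real C + 1) * q ^ m \<ge> q ^ T" using \<open>q ^ m \<ge> q ^ T\<close> by linarith
      then have "(real C + 1) * q ^ m / q ^ T \<ge> 1"
        using qT by (simp add: le_divide_eq_1_pos)
      then show ?thesis using base cdist_le_half[of "itc \<omega> m a" "itc \<omega> m b"] by simp
    qed
  qed
  then show ?thesis unfolding goodfull_def by blast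
qed

lemma transport:
  assumes w: "\<omega> \<in> W" and q: "0 < q" "q < 1"
    and x: "x \<in> circle" and y: "y \<in> circle" and xy: "x \<noteq> y"
    and wc: "c \<in> circle" and r: "r < 1/2"
    and dx: "cdist c (itc \<omega> T x) \<le> r" and dy: "cdist c (itc \<omega> T y) \<le> r"
    and g: "good q (shift T \<omega>) (cb c r)"
  shows "good q \<omega> (carc x y) \<or> good q \<omega> (carc y x)"
proof -
  let ?u = "itc \<omega> T x" and ?v = "itc \<omega> T y"
  have u: "?u \<in> circle" and v: "?v \<in> circle" using itc_mapsc[OF w] x y by auto
  have uv: "?u \<noteq> ?v" using itc_props[OF w, of T] x y xy by (auto dest: inj_onD)
  obtain A where A: "A = carc ?u ?v \<or> A = carc ?v ?u" "A \<subseteq> cb c r"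
    using short_arc[OF wc u v uv dx dy r] by blast
  have gf: "goodfull q (shift T \<omega>) A"
    using goodfull_mono[OF good_goodfull[OF shift_W[OF w] g] A(2)] by (auto simp: cb_def)
  from itc_arc_pair[OF w x y xy A(1)]
  show ?thesis
  proof
    assume h: "itc \<omega> T ` carc x y = A"
    have "goodfull q (shift T \<omega>) (itc \<omega> T ` carc x y)" using gf h by simp
    then have "goodfull q \<omega> (carc x y)" using shift_lemma[OF w q] carc_sub_circle[OF x y] by blast
    then show ?thesis using goodfull_good by blast
  next
    assume h: "itc \<omega> T ` carc y x = A"
    have "goodfull q (shift T \<omega>) (itc \<omega> T ` carc y x)" using gf h by simp
    then have "goodfull q \<omega> (carc y x)" using shift_lemma[OF w q] carc_sub_circle[OF y x] by blast
    then show ?thesis using goodfull_good by blast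
  qed
qed

lemma cdiam_upper:
  assumes "a \<in> A" "b \<in> A"
  shows "cdist a b \<le> cdiam A"
  unfolding cdiam_def
proof (rule cSup_upper)
  show "cdist a b \<in> {cdist a b |a b. a \<in> A \<and> b \<in> A}" using assms by blast
  show "bdd_above {cdist a b |a b. a \<in> A \<and> b \<in> A}"
    by (rule bdd_aboveI[of _ "1/2"]) (use cdist_le_half in blast)
qed

lemma cdiam_least:
  assumes "A \<noteq> {}" "\<And>a b. a \<in> A \<Longrightarrow> b \<in> A \<Longrightarrow> cdist a b \<le> B"
  shows "cdiam A \<le> B"
  unfolding cdiam_def
proof (rule cSup_least)
  show "{cdist a b |a b. a \<in> A \<and> b \<in> A} \<noteq> {}" using assms(1) by blast
  show "\<And>x. x \<in> {cdist a b |a b. a \<in> A \<and> b \<in> A} \<Longrightarrow> x \<le> B" using assms(2) by blast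
qed

lemma chain_bound:
  assumes w: "\<omega> \<in> W" and x: "x \<in> circle" and L: "L \<ge> 0" and q: "q > 0"
    and FS: "frac ` {x..x+L} \<subseteq> S"
    and Ck: "\<forall>a b. gcond S k a b \<longrightarrow> (\<forall>n. cdist (itc \<omega> n a) (itc \<omega> n b) \<le> real C * q ^ n)"
  shows "\<exists>K>0. \<forall>n. \<forall>a\<in>frac ` {x..x+L}. \<forall>b\<in>frac ` {x..x+L}.
            cdist (itc \<omega> n a) (itc \<omega> n b) \<le> K * (real C * q ^ n)"
proof -
  define h where "h = 1 / (2 * (real k + 1))"
  have h: "h > 0" "h < 1 / (real k + 1)" unfolding h_def by (auto simp: field_simps)
  define N where "N = nat \<lceil>L / h\<rceil>"
  have NL: "real N * h \<ge> L"
  proof -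
    have "real N \<ge> L / h" unfolding N_def by linarith
    then show ?thesis using h by (simp add: divide_le_eq)
  qed
  have step: "\<forall>s\<in>{x..x+L}. s \<le> x + real i * h \<longrightarrow>
      cdist (itc \<omega> n x) (itc \<omega> n (frac s)) \<le> real i * (real C * q ^ n)" for i n
  proof (induction i)
    case 0
    then show ?case using frac_id[OF x] by auto
  next
    case (Suc i)
    show ?case
    proof (intro ballI impI)
      fix s assume s: "s \<in> {x..x+L}" and si: "s \<le> x + real (Suc i) * h"
      have Cq: "real C * q ^ n \<ge> 0" using q by simp
      show "cdist (itc \<omega> n x) (itc \<omega> n (frac s)) \<le> real (Suc i) * (real C * q ^ n)"
      proof (cases "s \<le> x + real i * h")
        case True
        then have "cdist (itc \<omega> n x) (itc \<omega> n (frac s)) \<le> real i * (real C * q ^ n)" using Suc s by blast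
        also have "\<dots> \<le> real (Suc i) * (real C * q ^ n)" using Cq by (intro mult_right_mono) auto
        finally show ?thesis .
      next
        case False
        define s' where "s' = x + real i * h"
        have s': "s' \<in> {x..x+L}" "s' \<le> x + real i * h" using False s h s'_def by auto
        have IH: "cdist (itc \<omega> n x) (itc \<omega> n (frac s')) \<le> real i * (real C * q ^ n)" using Suc s' by blast
        have ds: "\<bar>s' - s\<bar> \<le> h" using si False s'_def by (auto simp: algebra_simps)
        have "gcond S k (frac s') (frac s)"
          unfolding gcond_def
        proof (intro conjI bexI[of _ "frac s'"])
          show "frac s' \<in> circle" "frac s \<in> circle" by simp_all
          show "frac s' \<in> S" using FS s' by auto
          show "cdist (frac s') (frac s') < 1 / (real k + 1)" by simp
          show "cdist (frac s') (frac s) < 1 / (real k + 1)"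
            using cdist_frac[of s' s] ds h by simp
        qed
        then have one: "cdist (itc \<omega> n (frac s')) (itc \<omega> n (frac s)) \<le> real C * q ^ n" using Ck by blast
        have "cdist (itc \<omega> n x) (itc \<omega> n (frac s)) \<le>
              cdist (itc \<omega> n x) (itc \<omega> n (frac s')) + cdist (itc \<omega> n (frac s')) (itc \<omega> n (frac s))"
          using itc_mapsc[OF w] x by (intro cdist_triangle) auto
        also have "\<dots> \<le> real (Suc i) * (real C * q ^ n)" using IH one by (simp add: algebra_simps)
        finally show ?thesis .
      qed
    qed
  qed
  have allx: "cdist (itc \<omega> n x) (itc \<omega> n (frac s)) \<le> real N * (real C * q ^ n)" if "s \<in> {x..x+L}" for s n
    using step[of N n] that NL by auto
  show ?thesis
  proof (intro exI[of _ "2 * real N + 1"] conjI allI ballI)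
    show "2 * real N + 1 > 0" by simp
    fix n a b assume a: "a \<in> frac ` {x..x+L}" and b: "b \<in> frac ` {x..x+L}"
    obtain sa where sa: "sa \<in> {x..x+L}" "a = frac sa" using a by blast
    obtain sb where sb: "sb \<in> {x..x+L}" "b = frac sb" using b by blast
    have Cq: "real C * q ^ n \<ge> 0" using q by simp
    have "cdist (itc \<omega> n a) (itc \<omega> n b) \<le> cdist (itc \<omega> n a) (itc \<omega> n x) + cdist (itc \<omega> n x) (itc \<omega> n b)"
      using itc_mapsc[OF w] x sa sb by (intro cdist_triangle) auto
    also have "\<dots> \<le> real N * (real C * q ^ n) + real N * (real C * q ^ n)"
      using allx[OF sa(1), of n] allx[OF sb(1), of n] sa sb cdist_sym by (metis add_mono)
    also have "\<dots> \<le> (2 * real N + 1) * (real C * q ^ n)" using Cq by (simp add: algebra_simps)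
    finally show "cdist (itc \<omega> n a) (itc \<omega> n b) \<le> (2 * real N + 1) * (real C * q ^ n)" .
  qed
qed

lemma limsup_bound:
  fixes D :: "nat \<Rightarrow> real"
  assumes pos: "\<And>n. D n > 0" and K: "K > 0" and q: "0 < q" and bd: "\<And>n. D n \<le> K * q ^ n"
  shows "limsup (\<lambda>n. ereal (ln (D n) / real n)) \<le> ereal (ln q)"
proof -
  have ev: "\<forall>\<^sub>F n in sequentially. ereal (ln (D n) / real n) \<le> ereal (ln K / real n + ln q)"
    unfolding eventually_sequentially
  proof (intro exI[of _ 1] allI impI)
    fix n :: nat assume n: "n \<ge> 1"
    have "ln (D n) \<le> ln (K * q ^ n)" using pos[of n] bd[of n] by simp
    also have "\<dots> = ln K + real n * ln q" using K q by (simp add: ln_mult ln_realpow)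
    finally have "ln (D n) / real n \<le> (ln K + real n * ln q) / real n"
      using n by (simp add: divide_right_mono)
    also have "\<dots> = ln K / real n + ln q" using n by (simp add: field_simps)
    finally show "ereal (ln (D n) / real n) \<le> ereal (ln K / real n + ln q)" by simp
  qed
  have "limsup (\<lambda>n. ereal (ln (D n) / real n)) \<le> limsup (\<lambda>n. ereal (ln K / real n + ln q))"
    by (rule Limsup_mono[OF ev])
  also have "\<dots> = ereal (ln q)"
  proof (rule lim_imp_Limsup)
    show "\<not> trivial_limit (sequentially :: nat filter)" by simp
    have "(\<lambda>n. ln K / real n + ln q) \<longlonglongrightarrow> 0 + ln q"
      by (intro tendsto_add lim_const_over_n tendsto_const)
    then show "(\<lambda>n. ereal (ln K / real n + ln q)) \<longlonglongrightarrow> ereal (ln q)" by simp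
  qed
  finally show ?thesis .
qed

lemma goodfull_limsup:
  assumes w: "\<omega> \<in> W" and q: "0 < q" and x: "x \<in> circle" and y: "y \<in> circle" and xy: "x \<noteq> y"
    and g: "goodfull q \<omega> (carc x y)"
  shows "limsup (\<lambda>n. ereal (ln (cdiam (itc \<omega> n ` carc x y)) / real n)) \<le> ereal (ln q)"
proof -
  obtain C k where Ck: "\<forall>a b. gcond (carc x y) k a b \<longrightarrow> (\<forall>n. cdist (itc \<omega> n a) (itc \<omega> n b) \<le> real C * q ^ n)"
    using g unfolding goodfull_def by blast
  define L where "L = arclen x y"
  have cl: "carc x y = frac ` {x..x+L}" using carc_lift[OF x y xy] L_def by simp
  have L: "L \<ge> 0" using arclen_bounds[OF x y xy] L_def by simp
  obtain K where K: "K > 0" "\<forall>n. \<forall>a\<in>frac ` {x..x+L}. \<forall>b\<in>frac ` {x..x+L}.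
            cdist (itc \<omega> n a) (itc \<omega> n b) \<le> K * (real C * q ^ n)"
    using chain_bound[OF w x L q _ Ck] cl by auto
  define D where "D n = cdiam (itc \<omega> n ` carc x y)" for n
  have xin: "x \<in> carc x y" and yin: "y \<in> carc x y" using carc_oarc[OF x y xy] by auto
  have pos: "D n > 0" for n
  proof -
    have "cdist (itc \<omega> n x) (itc \<omega> n y) \<le> D n" unfolding D_def using xin yin by (intro cdiam_upper) auto
    moreover have "itc \<omega> n x \<noteq> itc \<omega> n y" using itc_props[OF w, of n] x y xy by (auto dest: inj_onD)
    then have "cdist (itc \<omega> n x) (itc \<omega> n y) > 0" using itc_mapsc[OF w] x y cdist_pos by blast
    ultimately show ?thesis by simp
  qed
  have bd: "D n \<le> (K * real C) * q ^ n" for n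
    unfolding D_def using K cl xin by (intro cdiam_least) (auto simp: mult.assoc)
  have KC: "K * real C > 0"
  proof (rule ccontr)
    assume "\<not> K * real C > 0"
    then have "K * real C \<le> 0" by simp
    then have "(K * real C) * q ^ 0 \<le> 0" by simp
    then show False using pos[of 0] bd[of 0] by linarith
  qed
  show ?thesis using limsup_bound[OF pos KC q bd] unfolding D_def .
qed

lemma local_good:
  assumes w: "\<omega> \<in> W" and c: "c \<in> circle" and a: "a \<in> circle" and b: "b \<in> circle" and ab: "a \<noteq> b"
    and co: "c \<in> oarc a b" and d: "\<forall>n. cdiam (itc \<omega> n ` carc a b) \<le> q ^ n"
  shows "\<exists>k. good q \<omega> (cb c (1 / (real k + 1)))"
proof -
  obtain \<rho> where \<rho>: "\<rho> > 0" "\<forall>t'\<in>circle. cdist c t' < \<rho> \<longrightarrow> t' \<in> oarc a b"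
    using oarc_open[OF a b ab co] by blast
  obtain k where "inverse (real (Suc k)) < \<rho> / 2" using reals_Archimedean[of "\<rho>/2"] \<rho> by auto
  then have k: "1 / (real k + 1) < \<rho> / 2" by (simp add: inverse_eq_divide add.commute)
  have sub: "t \<in> carc a b" if t: "t \<in> circle" "cdist c t < \<rho>" for t
    using \<rho>(2) t carc_oarc[OF a b ab] by auto
  have key: "cdist (itc \<omega> n (of_rat ra)) (itc \<omega> n (of_rat rb)) \<le> real (1::nat) * q ^ n"
    if gc: "gcond (cb c (1 / (real k + 1))) k (of_rat ra) (of_rat rb)" for ra rb :: rat and n :: nat
  proof -
    obtain z where z: "z \<in> circle" "cdist c z \<le> 1 / (real k + 1)"
        "cdist z (of_rat ra) < 1 / (real k + 1)" "cdist z (of_rat rb) < 1 / (real k + 1)"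
      and ra: "of_rat ra \<in> circle" and rb: "of_rat rb \<in> circle"
      using gc unfolding gcond_def cb_def by blast
    have "cdist c (of_rat ra) < \<rho>" using cdist_triangle[OF c z(1) ra] z k by simp
    then have A: "of_rat ra \<in> carc a b" using sub ra by blast
    have "cdist c (of_rat rb) < \<rho>" using cdist_triangle[OF c z(1) rb] z k by simp
    then have B: "of_rat rb \<in> carc a b" using sub rb by blast
    have "cdist (itc \<omega> n (of_rat ra)) (itc \<omega> n (of_rat rb)) \<le> cdiam (itc \<omega> n ` carc a b)"
      using A B by (intro cdiam_upper) auto
    also have "\<dots> \<le> q ^ n" using d by blast
    finally show ?thesis by simp
  qed
  have "good q \<omega> (cb c (1 / (real k + 1)))"
    unfolding good_def using key by blast
  then show ?thesis by blast
qed

definition Ec :: "real \<Rightarrow> complex" where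
  "Ec t = cis (2 * pi * t)"

lemma Ec_add_int: "Ec (t + of_int k) = Ec t"
proof -
  have "Ec (t + of_int k) = cis (2 * pi * t) * cis (2 * pi * of_int k)"
    by (simp add: Ec_def cis_mult algebra_simps)
  also have "cis (2 * pi * of_int k) = 1" by (rule cis_multiple_2pi) simp
  finally show ?thesis by (simp add: Ec_def)
qed

lemma Ec_frac: "Ec (frac s) = Ec s"
proof -
  have "frac s = s + of_int (- \<lfloor>s\<rfloor>)" by (simp add: frac_def)
  then show ?thesis using Ec_add_int by metis
qed

lemma Ec_cont:
  assumes e: "e > 0"
  shows "\<exists>d>0. \<forall>u\<in>circle. \<forall>v\<in>circle. cdist u v < d \<longrightarrow> cmod (Ec u - Ec v) < e"
proof -
  have "isCont cis 0" using continuous_on_cis[of UNIV "\<lambda>x. x"] continuous_on_id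
    by (simp add: continuous_on_eq_continuous_at)
  then obtain d0 where d0: "d0 > 0" "\<forall>x. dist x 0 < d0 \<longrightarrow> dist (cis x) (cis 0) < e"
    using e unfolding continuous_at_eps_delta by blast
  define d where "d = d0 / (2 * pi)"
  have d: "d > 0" using d0 by (simp add: d_def)
  have "cmod (Ec u - Ec v) < e" if u: "u \<in> circle" and v: "v \<in> circle" and uv: "cdist u v < d" for u v
  proof -
    obtain \<delta> where dl: "\<bar>\<delta>\<bar> = cdist v u" "u = frac (v + \<delta>)" using cdist_lift[OF v u] by blast
    have "Ec u = Ec (v + \<delta>)" using dl Ec_frac by simp
    also have "\<dots> = Ec v * cis (2 * pi * \<delta>)" by (simp add: Ec_def cis_mult algebra_simps)
    finally have "Ec u - Ec v = Ec v * (cis (2 * pi * \<delta>) - 1)" by (simp add: algebra_simps)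
    then have "cmod (Ec u - Ec v) = cmod (cis (2 * pi * \<delta>) - 1)" by (simp add: norm_mult Ec_def)
    moreover have "\<bar>2 * pi * \<delta>\<bar> < d0"
    proof -
      have "\<bar>\<delta>\<bar> < d" using dl uv cdist_sym by metis
      then have "2 * pi * \<bar>\<delta>\<bar> < 2 * pi * d" by simp
      then show ?thesis using d_def by (simp add: abs_mult)
    qed
    then have "dist (cis (2 * pi * \<delta>)) (cis 0) < e" using d0 by (simp add: dist_real_def)
    ultimately show ?thesis by (simp add: dist_norm)
  qed
  then show ?thesis using d by blast
qed

definition clampac :: "real \<Rightarrow> real" where
  "clampac x = arccos (max (-1) (min 1 x))"

definition Inv :: "complex \<Rightarrow> real" where
  "Inv z = (if Im z \<ge> 0 then clampac (Re z) else 2 * pi - clampac (Re z)) / (2 * pi)"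

lemma Inv_Ec: assumes t: "t \<in> circle" shows "Inv (Ec t) = t"
proof -
  have t0: "0 \<le> t" "t < 1" using t by (auto simp: circle_def)
  have ccos: "clampac (cos x) = arccos (cos x)" for x
    by (simp add: clampac_def)
  show ?thesis
  proof (cases "t \<le> 1/2")
    case True
    have "0 \<le> 2 * pi * t" "2 * pi * t \<le> pi" using True t0 by auto
    then have "sin (2 * pi * t) \<ge> 0" "arccos (cos (2 * pi * t)) = 2 * pi * t"
      by (auto intro: sin_ge_zero arccos_cos)
    then show ?thesis by (simp add: Inv_def Ec_def ccos)
  next
    case False
    have a: "pi < 2 * pi * t" "2 * pi * t < 2 * pi" using False t0 by auto
    then have s: "sin (2 * pi * t) < 0" by (rule sin_lt_zero)
    have ce: "cos (2 * pi * t) = cos (2 * pi - 2 * pi * t)" by (simp add: cos_diff)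
    have "0 \<le> 2 * pi - 2 * pi * t" "2 * pi - 2 * pi * t \<le> pi" using a by auto
    then have "arccos (cos (2 * pi - 2 * pi * t)) = 2 * pi - 2 * pi * t" by (rule arccos_cos)
    moreover have "arccos (cos (2 * pi * t)) = arccos (cos (2 * pi - 2 * pi * t))" using ce by (rule arg_cong)
    ultimately have "arccos (cos (2 * pi * t)) = 2 * pi - 2 * pi * t" by (rule trans[rotated])
    then show ?thesis using s by (simp add: Inv_def Ec_def ccos)
  qed
qed

lemma clampac_cont: "continuous_on UNIV clampac"
  unfolding clampac_def by (intro continuous_intros) auto

lemma Inv_meas: "Inv \<in> borel_measurable borel"
proof -
  have [measurable]: "clampac \<in> borel_measurable borel"
    by (rule borel_measurable_continuous_onI[OF clampac_cont])
  show ?thesis unfolding Inv_def by measurable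
qed

lemma Ec_meas: "Ec \<in> borel_measurable borel"
  unfolding Ec_def by (intro borel_measurable_continuous_onI continuous_intros)


lemma hdist_upper:
  assumes "c \<in> circle"
  shows "cdist (f c) (g c) \<le> hdist f g"
  unfolding hdist_def
proof (rule cSup_upper)
  show "cdist (f c) (g c) \<in> {cdist (f x) (g x) |x. x \<in> circle}" using assms by blast
  show "bdd_above {cdist (f x) (g x) |x. x \<in> circle}"
    by (rule bdd_aboveI[of _ "1/2"]) (use cdist_le_half in blast)
qed

lemma hdist_least:
  assumes "\<And>c. c \<in> circle \<Longrightarrow> cdist (f c) (g c) \<le> B"
  shows "hdist f g \<le> B"
  unfolding hdist_def
proof (rule cSup_least)
  show "{cdist (f x) (g x) |x. x \<in> circle} \<noteq> {}" by (auto simp: circle_def)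
  show "\<And>x. x \<in> {cdist (f x) (g x) |x. x \<in> circle} \<Longrightarrow> x \<le> B" using assms by blast
qed

lemma hdist_sym: "hdist f g = hdist g f"
  unfolding hdist_def using cdist_sym by metis

lemma hdist_triangle:
  assumes "mapsc f" "mapsc g" "mapsc h"
  shows "hdist f h \<le> hdist f g + hdist g h"
proof (rule hdist_least)
  fix c assume c: "c \<in> circle"
  have "cdist (f c) (h c) \<le> cdist (f c) (g c) + cdist (g c) (h c)"
    using assms c by (intro cdist_triangle) (auto simp: mapsc_def)
  also have "\<dots> \<le> hdist f g + hdist g h" using hdist_upper[OF c] by (simp add: add_mono)
  finally show "cdist (f c) (h c) \<le> hdist f g + hdist g h" .
qed

lemma hopen_ball:
  assumes h: "h \<in> HomS1"
  shows "hopen {g \<in> HomS1. hdist h g < e}"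
  unfolding hopen_def
proof (intro conjI ballI)
  show "{g \<in> HomS1. hdist h g < e} \<subseteq> HomS1" by blast
  fix g assume g: "g \<in> {g \<in> HomS1. hdist h g < e}"
  show "\<exists>e'>0. \<forall>g'\<in>HomS1. hdist g g' < e' \<longrightarrow> g' \<in> {g \<in> HomS1. hdist h g < e}"
  proof (intro exI[of _ "e - hdist h g"] conjI ballI impI)
    show "e - hdist h g > 0" using g by simp
    fix g' assume g': "g' \<in> HomS1" "hdist g g' < e - hdist h g"
    have "hdist h g' \<le> hdist h g + hdist g g'"
      using h g g' by (intro hdist_triangle) (auto intro: HomS1_mapsc)
    then show "g' \<in> {g \<in> HomS1. hdist h g < e}" using g' by simp
  qed
qed

lemma hopen_sets: "hopen U \<Longrightarrow> U \<in> borel_HomS1"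
  unfolding borel_HomS1_def by (rule sigma_sets.Basic) simp

locale setting =
  fixes \<nu> :: "(real \<Rightarrow> real) measure"
  assumes prob: "prob_space \<nu>" and sp: "space \<nu> = HomS1" and st: "sets \<nu> = borel_HomS1"
begin

sublocale seq: sequence_space \<nu>
  by (simp add: sequence_space_def product_prob_space_def product_sigma_finite_def
      product_prob_space_axioms_def prob prob_space_imp_sigma_finite)

lemma S_eq: "prod_measure \<nu> = seq.S"
  by (simp add: prod_measure_def)

lemma space_S: "space seq.S = W"
  by (auto simp: space_PiM W_def sp PiE_def extensional_def)

lemma ev_meas: "(\<lambda>f. f c) \<in> borel_measurable \<nu>"
proof (cases "c \<in> circle")
  case True
  have m1: "(\<lambda>f. Ec (f c)) \<in> borel_measurable \<nu>"
  proof (rule borel_measurableI)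
    fix U :: "complex set" assume U: "open U"
    have "hopen ((\<lambda>f. Ec (f c)) -` U \<inter> HomS1)"
      unfolding hopen_def
    proof (intro conjI ballI)
      show "(\<lambda>f. Ec (f c)) -` U \<inter> HomS1 \<subseteq> HomS1" by blast
      fix f assume f: "f \<in> (\<lambda>f. Ec (f c)) -` U \<inter> HomS1"
      obtain e where e: "e > 0" "\<forall>z. dist z (Ec (f c)) < e \<longrightarrow> z \<in> U"
        using U f unfolding open_dist by blast
      obtain d where d: "d > 0" "\<forall>u\<in>circle. \<forall>v\<in>circle. cdist u v < d \<longrightarrow> cmod (Ec u - Ec v) < e"
        using Ec_cont[OF e(1)] by blast
      show "\<exists>e>0. \<forall>g\<in>HomS1. hdist f g < e \<longrightarrow> g \<in> (\<lambda>f. Ec (f c)) -` U \<inter> HomS1"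
      proof (intro exI[of _ d] conjI ballI impI)
        show "d > 0" by fact
        fix g assume g: "g \<in> HomS1" "hdist f g < d"
        have fc: "f c \<in> circle" and gc: "g c \<in> circle"
          using f g True HomS1_mapsc unfolding mapsc_def by auto
        have "cdist (f c) (g c) < d" using hdist_upper[OF True, of f g] g by simp
        then have "cmod (Ec (f c) - Ec (g c)) < e" using d fc gc by blast
        then have "dist (Ec (g c)) (Ec (f c)) < e" by (simp add: dist_norm norm_minus_commute)
        then show "g \<in> (\<lambda>f. Ec (f c)) -` U \<inter> HomS1" using e g by blast
      qed
    qed
    then show "(\<lambda>f. Ec (f c)) -` U \<inter> space \<nu> \<in> sets \<nu>" using hopen_sets sp st by simp
  qed
  have "(\<lambda>f. Inv (Ec (f c))) \<in> borel_measurable \<nu>"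
    using measurable_compose[OF m1 Inv_meas] by (simp add: o_def)
  moreover have "Inv (Ec (f c)) = f c" if "f \<in> space \<nu>" for f
    using that True sp HomS1_mapsc Inv_Ec unfolding mapsc_def by auto
  ultimately show ?thesis using measurable_cong by (smt (verit, best))
next
  case False
  have "f c = undefined" if "f \<in> space \<nu>" for f
    using that False sp unfolding HomS1_def extensional_def by auto
  then show ?thesis using measurable_cong[of \<nu> "\<lambda>f. f c" "\<lambda>f. undefined"] by simp
qed

lemma itc_meas:
  assumes a: "a \<in> circle"
  shows "(\<lambda>\<omega>. itc \<omega> n a) \<in> borel_measurable seq.S"
proof (induction n)
  case 0
  then show ?case by simp
next
  case (Suc n)
  define X where "X = (\<lambda>\<omega>. itc \<omega> n a)"
  have Xm: "X \<in> borel_measurable seq.S" using Suc X_def by simp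
  have Xc: "X \<omega> \<in> circle" if "\<omega> \<in> space seq.S" for \<omega>
    using that itc_mapsc[OF _ a] space_S X_def by auto
  define Y where "Y m \<omega> = Ec (\<omega> n (real_of_int \<lfloor>real (Suc m) * X \<omega>\<rfloor> / real (Suc m)))" for m \<omega>
  have Ym: "Y m \<in> borel_measurable seq.S" for m
  proof -
    have f: "(\<lambda>\<omega>. Ec (\<omega> n (real_of_int i / real (Suc m)))) \<in> borel_measurable seq.S" for i :: int
    proof -
      have "(\<lambda>\<omega>. \<omega> n) \<in> measurable seq.S \<nu>" by (rule measurable_component_singleton) simp
      then have "(\<lambda>\<omega>. \<omega> n (real_of_int i / real (Suc m))) \<in> borel_measurable seq.S"
        using measurable_compose[OF _ ev_meas] by blast
      then show ?thesis using measurable_compose[OF _ Ec_meas] by blast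
    qed
    have g: "(\<lambda>\<omega>. \<lfloor>real (Suc m) * X \<omega>\<rfloor>) \<in> measurable seq.S (count_space UNIV)"
    proof -
      have "(\<lambda>\<omega>. real (Suc m) * X \<omega>) \<in> borel_measurable seq.S" using Xm by measurable
      moreover have "(floor :: real \<Rightarrow> int) \<in> measurable borel (count_space UNIV)" by measurable
      ultimately show ?thesis using measurable_compose by blast
    qed
    show ?thesis unfolding Y_def by (rule measurable_compose_countable[OF f g])
  qed
  have lim: "(\<lambda>m. Y m \<omega>) \<longlonglongrightarrow> Ec (\<omega> n (X \<omega>))" if w: "\<omega> \<in> space seq.S" for \<omega>
  proof (rule LIMSEQ_I)
    fix r :: real assume r: "r > 0"
    have h: "\<omega> n \<in> HomS1" using w space_S by (simp add: W_def)
    obtain d1 where d1: "d1 > 0" "\<forall>u\<in>circle. \<forall>v\<in>circle. cdist u v < d1 \<longrightarrow> cmod (Ec u - Ec v) < r"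
      using Ec_cont[OF r] by blast
    obtain d2 where d2: "d2 > 0" "\<forall>u\<in>circle. \<forall>v\<in>circle. cdist u v < d2 \<longrightarrow> cdist (\<omega> n u) (\<omega> n v) < d1"
      using HomS1_ucont[OF h] d1(1) unfolding ucont_def by blast
    obtain N where N: "inverse (real (Suc N)) < d2" using reals_Archimedean[OF d2(1)] by blast
    show "\<exists>no. \<forall>m\<ge>no. norm (Y m \<omega> - Ec (\<omega> n (X \<omega>))) < r"
    proof (intro exI[of _ N] allI impI)
      fix m assume m: "m \<ge> N"
      define t where "t = X \<omega>"
      define tm where "tm = real_of_int \<lfloor>real (Suc m) * t\<rfloor> / real (Suc m)"
      have tc: "t \<in> circle" using Xc[OF w] t_def by simp
      have fl: "real_of_int \<lfloor>real (Suc m) * t\<rfloor> \<le> real (Suc m) * t"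
               "real (Suc m) * t < real_of_int \<lfloor>real (Suc m) * t\<rfloor> + 1"
        by linarith+
      have tm1: "tm \<le> t" using fl(1) by (simp add: tm_def divide_le_eq mult.commute)
      have tm2: "t - tm < 1 / real (Suc m)"
      proof -
        have "t - tm = (real (Suc m) * t - real_of_int \<lfloor>real (Suc m) * t\<rfloor>) / real (Suc m)"
          by (simp add: tm_def diff_divide_distrib)
        also have "\<dots> < 1 / real (Suc m)"
        proof (rule divide_strict_right_mono)
          show "real (Suc m) * t - real_of_int \<lfloor>real (Suc m) * t\<rfloor> < 1" using fl(2) by linarith
          show "0 < real (Suc m)" by simp
        qed
        finally show ?thesis .
      qed
      have "0 \<le> real (Suc m) * t" using tc by (simp add: circle_def)
      then have "0 \<le> real_of_int \<lfloor>real (Suc m) * t\<rfloor>" by simp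
      then have tm0: "0 \<le> tm" by (simp add: tm_def)
      have tmc: "tm \<in> circle" using tm0 tm1 tc by (simp add: circle_def)
      have "1 / real (Suc m) \<le> inverse (real (Suc N))" using m by (simp add: inverse_eq_divide frac_le)
      then have "cdist t tm < d2" using cdist_le_abs[of t tm] tm1 tm2 N by simp
      then have "cdist (\<omega> n t) (\<omega> n tm) < d1" using d2 tc tmc by blast
      moreover have "\<omega> n t \<in> circle" "\<omega> n tm \<in> circle" using HomS1_mapsc[OF h] tc tmc by (auto simp: mapsc_def)
      ultimately have "cmod (Ec (\<omega> n t) - Ec (\<omega> n tm)) < r" using d1 by blast
      then show "norm (Y m \<omega> - Ec (\<omega> n (X \<omega>))) < r"
        by (simp add: Y_def t_def tm_def norm_minus_commute)
    qed
  qed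
  have Zm: "(\<lambda>\<omega>. Ec (\<omega> n (X \<omega>))) \<in> borel_measurable seq.S"
    by (rule borel_measurable_LIMSEQ_metric[OF Ym lim])
  have "(\<lambda>\<omega>. Inv (Ec (\<omega> n (X \<omega>)))) \<in> borel_measurable seq.S"
    using measurable_compose[OF Zm Inv_meas] by (simp add: o_def)
  moreover have "Inv (Ec (\<omega> n (X \<omega>))) = itc \<omega> (Suc n) a" if w: "\<omega> \<in> space seq.S" for \<omega>
  proof -
    have h: "\<omega> n \<in> HomS1" using w space_S by (simp add: W_def)
    have "\<omega> n (X \<omega>) \<in> circle" using HomS1_mapsc[OF h] Xc[OF w] by (simp add: mapsc_def)
    then show ?thesis using Inv_Ec X_def by simp
  qed
  ultimately show ?case using measurable_cong by (smt (verit, best))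
qed

end

context setting
begin

lemma cdist_pred:
  assumes a: "a \<in> circle" and b: "b \<in> circle"
  shows "Measurable.pred seq.S (\<lambda>\<omega>. \<forall>n. cdist (itc \<omega> n a) (itc \<omega> n b) \<le> c n)"
proof -
  have [measurable]: "(\<lambda>\<omega>. itc \<omega> n a) \<in> borel_measurable seq.S" for n using itc_meas[OF a] .
  have [measurable]: "(\<lambda>\<omega>. itc \<omega> n b) \<in> borel_measurable seq.S" for n using itc_meas[OF b] .
  have m: "(\<lambda>\<omega>. cdist (itc \<omega> n a) (itc \<omega> n b)) \<in> borel_measurable seq.S" for n
    unfolding cdist_def by measurable
  have "Measurable.pred seq.S (\<lambda>\<omega>. cdist (itc \<omega> n a) (itc \<omega> n b) \<le> c n)" for n
    unfolding pred_def by (intro borel_measurable_le m borel_measurable_const)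
  then show ?thesis by (intro pred_intros_countable)
qed

lemma good_pred: "Measurable.pred seq.S (\<lambda>\<omega>. good q \<omega> A)"
proof -
  have p: "Measurable.pred seq.S (\<lambda>\<omega>. gcond A k (of_rat ra) (of_rat rb) \<longrightarrow>
      (\<forall>n. cdist (itc \<omega> n (of_rat ra)) (itc \<omega> n (of_rat rb)) \<le> real C * q ^ n))" for C k ra rb
  proof (cases "gcond A k (of_rat ra) (of_rat rb)")
    case True
    then have "of_rat ra \<in> circle" "of_rat rb \<in> circle" by (auto simp: gcond_def)
    then show ?thesis using True cdist_pred by simp
  next
    case False
    then show ?thesis by simp
  qed
  show ?thesis unfolding good_def by (intro pred_intros_countable p)
qed

lemma good_sets: "{\<omega> \<in> space seq.S. good q \<omega> A} \<in> sets seq.S"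
  using good_pred by (rule predE)

lemma shift_meas: "shift T \<in> measurable seq.S seq.S"
proof -
  have "(\<lambda>\<omega> i. \<omega> (i + T)) \<in> measurable seq.S seq.S"
  proof (rule measurable_PiM_single')
    show "\<And>i. i \<in> UNIV \<Longrightarrow> (\<lambda>\<omega>. \<omega> (i + T)) \<in> measurable seq.S \<nu>"
      by (rule measurable_component_singleton) simp
    show "(\<lambda>\<omega> i. \<omega> (i + T)) \<in> space seq.S \<rightarrow> (\<Pi>\<^sub>E i\<in>UNIV. space \<nu>)"
      by (auto simp: space_PiM)
  qed
  then show ?thesis by (simp add: shift_def[abs_def])
qed

definition dep :: "(nat \<Rightarrow> real \<Rightarrow> real) set \<Rightarrow> nat \<Rightarrow> bool" where
  "dep A T \<longleftrightarrow> (\<forall>\<omega>\<in>space seq.S. \<forall>\<omega>'\<in>space seq.S. (\<forall>i<T. \<omega> i = \<omega>' i) \<longrightarrow> (\<omega> \<in> A \<longleftrightarrow> \<omega>' \<in> A))"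

lemma indep_shift:
  assumes A: "A \<in> sets seq.S" and dA: "dep A T" and N: "N \<in> sets seq.S"
  shows "emeasure seq.S {\<omega> \<in> A. shift T \<omega> \<in> N} = emeasure seq.S A * emeasure seq.S N"
proof -
  let ?\<Phi> = "\<lambda>(\<omega>, \<omega>'). comb_seq T \<omega> \<omega>'"
  define X where "X = {\<omega> \<in> A. shift T \<omega> \<in> N}"
  have X: "X \<in> sets seq.S"
  proof -
    have "X = A \<inter> (shift T -` N \<inter> space seq.S)"
      using sets.sets_into_space[OF A] by (auto simp: X_def)
    then show ?thesis using A measurable_sets[OF shift_meas N] by simp
  qed
  have "emeasure seq.S X = emeasure (distr (seq.S \<Otimes>\<^sub>M seq.S) seq.S ?\<Phi>) X"
    using seq.PiM_comb_seq[of T] by simp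
  also have "\<dots> = emeasure (seq.S \<Otimes>\<^sub>M seq.S) (?\<Phi> -` X \<inter> space (seq.S \<Otimes>\<^sub>M seq.S))"
    by (rule emeasure_distr[OF measurable_comb_seq X])
  also have "?\<Phi> -` X \<inter> space (seq.S \<Otimes>\<^sub>M seq.S) = A \<times> N"
  proof (intro set_eqI iffI)
    fix p assume p: "p \<in> ?\<Phi> -` X \<inter> space (seq.S \<Otimes>\<^sub>M seq.S)"
    obtain \<omega> \<omega>' where pe: "p = (\<omega>, \<omega>')" by fastforce
    have sp1: "\<omega> \<in> space seq.S" "\<omega>' \<in> space seq.S" using p pe by (auto simp: space_pair_measure)
    have "(\<omega>, \<omega>') \<in> space (seq.S \<Otimes>\<^sub>M seq.S)" using sp1 by (simp add: space_pair_measure)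
    from measurable_space[OF measurable_comb_seq[where i = T] this]
    have cs: "comb_seq T \<omega> \<omega>' \<in> space seq.S" by simp
    have cX: "comb_seq T \<omega> \<omega>' \<in> X" using p pe by simp
    have "\<forall>i<T. comb_seq T \<omega> \<omega>' i = \<omega> i" by (simp add: comb_seq_less)
    then have "\<omega> \<in> A" using dA cs sp1 cX unfolding dep_def X_def by blast
    moreover have "shift T (comb_seq T \<omega> \<omega>') = \<omega>'" by (simp add: shift_def comb_seq_add)
    then have "\<omega>' \<in> N" using cX X_def by simp
    ultimately show "p \<in> A \<times> N" using pe by simp
  next
    fix p assume p: "p \<in> A \<times> N"
    obtain \<omega> \<omega>' where pe: "p = (\<omega>, \<omega>')" by fastforce
    have sp1: "\<omega> \<in> space seq.S" "\<omega>' \<in> space seq.S"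
      using p pe sets.sets_into_space[OF A] sets.sets_into_space[OF N] by auto
    have "(\<omega>, \<omega>') \<in> space (seq.S \<Otimes>\<^sub>M seq.S)" using sp1 by (simp add: space_pair_measure)
    from measurable_space[OF measurable_comb_seq[where i = T] this]
    have cs: "comb_seq T \<omega> \<omega>' \<in> space seq.S" by simp
    have "\<forall>i<T. comb_seq T \<omega> \<omega>' i = \<omega> i" by (simp add: comb_seq_less)
    then have "comb_seq T \<omega> \<omega>' \<in> A \<longleftrightarrow> \<omega> \<in> A"
      using dA[unfolded dep_def, rule_format, OF cs sp1(1)] by blast
    moreover have "\<omega> \<in> A" using p pe by simp
    ultimately have "comb_seq T \<omega> \<omega>' \<in> A" by blast
    moreover have "shift T (comb_seq T \<omega> \<omega>') = \<omega>'" by (simp add: shift_def comb_seq_add)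
    ultimately have "comb_seq T \<omega> \<omega>' \<in> X" using p pe X_def by simp
    then show "p \<in> ?\<Phi> -` X \<inter> space (seq.S \<Otimes>\<^sub>M seq.S)" using pe sp1 by (simp add: space_pair_measure)
  qed
  also have "emeasure (seq.S \<Otimes>\<^sub>M seq.S) (A \<times> N) = emeasure seq.S A * emeasure seq.S N"
    by (rule seq.P.emeasure_pair_measure_Times[OF A N])
  finally show ?thesis unfolding X_def .
qed

lemma cyl0: "B \<in> sets \<nu> \<Longrightarrow> emeasure seq.S {\<omega> \<in> space seq.S. \<omega> 0 \<in> B} = emeasure \<nu> B"
  by (rule seq.emeasure_PiM_Collect_single) simp

end

lemma hdist_self: "hdist f f = 0"
proof -
  have "{cdist (f x) (f x) |x. x \<in> circle} = {0}" by (auto simp: circle_def)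
  then show ?thesis by (simp add: hdist_def)
qed

lemma ucont_cong: "ucont f \<Longrightarrow> (\<And>x. x \<in> circle \<Longrightarrow> g x = f x) \<Longrightarrow> ucont g"
  unfolding ucont_def by simp

context setting
begin

definition approx :: "(real \<Rightarrow> real) \<Rightarrow> bool" where
  "approx h \<longleftrightarrow> (\<forall>e>0. \<exists>m E. E \<in> sets seq.S \<and> dep E m \<and> emeasure seq.S E > 0 \<and>
      (\<forall>\<omega>\<in>E. \<forall>t\<in>circle. cdist (itc \<omega> m t) (h t) < e))"

lemma approx_semigroup:
  assumes "h \<in> gen_semigroup (support \<nu>)"
  shows "ucont h \<and> mapsc h \<and> approx h"
  using assms
proof (induction rule: gen_semigroup.induct)
  case (base h)
  have h: "h \<in> HomS1" and pos: "\<And>U. hopen U \<Longrightarrow> h \<in> U \<Longrightarrow> emeasure \<nu> U > 0"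
    using base unfolding support_def by auto
  have "approx h"
    unfolding approx_def
  proof (intro allI impI)
    fix e :: real assume e: "e > 0"
    define B where "B = {g \<in> HomS1. hdist h g < e}"
    have Bs: "B \<in> sets \<nu>" using hopen_ball[OF h] hopen_sets st B_def by simp
    have Bp: "emeasure \<nu> B > 0" using pos[OF hopen_ball[OF h]] h e hdist_self B_def by simp
    define E where "E = {\<omega> \<in> space seq.S. \<omega> 0 \<in> B}"
    have Es: "E \<in> sets seq.S"
    proof -
      have m: "(\<lambda>\<omega>. \<omega> 0) \<in> measurable seq.S \<nu>" by (rule measurable_component_singleton) simp
      have "E = (\<lambda>\<omega>. \<omega> 0) -` B \<inter> space seq.S" by (auto simp: E_def)
      then show ?thesis using measurable_sets[OF m Bs] by simp
    qed
    have Ed: "dep E 1" unfolding dep_def E_def by auto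
    have Ep: "emeasure seq.S E > 0" using cyl0[OF Bs] Bp E_def by simp
    have "\<forall>\<omega>\<in>E. \<forall>t\<in>circle. cdist (itc \<omega> 1 t) (h t) < e"
    proof (intro ballI)
      fix \<omega> t assume w: "\<omega> \<in> E" and t: "t \<in> circle"
      have "cdist (itc \<omega> 1 t) (h t) = cdist (h t) (\<omega> 0 t)" by (simp add: cdist_sym)
      also have "\<dots> \<le> hdist h (\<omega> 0)" by (rule hdist_upper[OF t])
      also have "\<dots> < e" using w E_def B_def by simp
      finally show "cdist (itc \<omega> 1 t) (h t) < e" .
    qed
    then show "\<exists>m E. E \<in> sets seq.S \<and> dep E m \<and> emeasure seq.S E > 0 \<and>
      (\<forall>\<omega>\<in>E. \<forall>t\<in>circle. cdist (itc \<omega> m t) (h t) < e)" using Es Ed Ep by blast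
  qed
  then show ?case using HomS1_ucont[OF h] HomS1_mapsc[OF h] by blast
next
  case (comp f g)
  let ?h = "restrict (f \<circ> g) circle"
  have uf: "ucont f" and mf: "mapsc f" and af: "approx f" and ug: "ucont g" and mg: "mapsc g" and ag: "approx g"
    using comp by auto
  have hx: "?h x = f (g x)" if "x \<in> circle" for x using that by simp
  have uh: "ucont ?h" using ucont_cong[OF ucont_comp[OF uf ug mg] hx] by blast
  have mh: "mapsc ?h" using mf mg unfolding mapsc_def by simp
  have "approx ?h"
    unfolding approx_def
  proof (intro allI impI)
    fix e :: real assume e: "e > 0"
    obtain d where d: "d > 0" "\<forall>a\<in>circle. \<forall>b\<in>circle. cdist a b < d \<longrightarrow> cdist (f a) (f b) < e/2"
      using uf e unfolding ucont_def by (meson half_gt_zero)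
    obtain mg Eg where g1: "Eg \<in> sets seq.S" "dep Eg mg" "emeasure seq.S Eg > 0"
        "\<forall>\<omega>\<in>Eg. \<forall>t\<in>circle. cdist (itc \<omega> mg t) (g t) < d"
      using ag d(1) unfolding approx_def by blast
    have e2: "e/2 > 0" using e by simp
    obtain mf Ef where f1: "Ef \<in> sets seq.S" "dep Ef mf" "emeasure seq.S Ef > 0"
        "\<forall>\<omega>\<in>Ef. \<forall>t\<in>circle. cdist (itc \<omega> mf t) (f t) < e/2"
      using af e2 unfolding approx_def by blast
    define E where "E = {\<omega> \<in> Eg. shift mg \<omega> \<in> Ef}"
    have Es: "E \<in> sets seq.S"
    proof -
      have "E = Eg \<inter> (shift mg -` Ef \<inter> space seq.S)"
        using sets.sets_into_space[OF g1(1)] by (auto simp: E_def)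
      then show ?thesis using g1(1) measurable_sets[OF shift_meas f1(1)] by simp
    qed
    have eqm: "emeasure seq.S E = emeasure seq.S Eg * emeasure seq.S Ef"
      unfolding E_def by (rule indep_shift[OF g1(1) g1(2) f1(1)])
    have "0 < emeasure seq.S Eg * emeasure seq.S Ef"
      unfolding ennreal_zero_less_mult_iff using g1(3) f1(3) by blast
    then have Ep: "emeasure seq.S E > 0" unfolding eqm .
    have Ed: "dep E (mg + mf)"
      unfolding dep_def
    proof (intro ballI impI)
      fix \<omega> \<omega>' assume w: "\<omega> \<in> space seq.S" "\<omega>' \<in> space seq.S" and agree: "\<forall>i<mg + mf. \<omega> i = \<omega>' i"
      have "\<forall>i<mg. \<omega> i = \<omega>' i" using agree by simp
      then have a1: "\<omega> \<in> Eg \<longleftrightarrow> \<omega>' \<in> Eg" using g1(2)[unfolded dep_def, rule_format, OF w] by blast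
      have sw: "shift mg \<omega> \<in> space seq.S" "shift mg \<omega>' \<in> space seq.S"
        using w space_S shift_W by auto
      have "\<forall>i<mf. shift mg \<omega> i = shift mg \<omega>' i" using agree by (simp add: shift_def)
      then have a2: "shift mg \<omega> \<in> Ef \<longleftrightarrow> shift mg \<omega>' \<in> Ef" using f1(2)[unfolded dep_def, rule_format, OF sw] by blast
      show "\<omega> \<in> E \<longleftrightarrow> \<omega>' \<in> E" using a1 a2 E_def by blast
    qed
    have "\<forall>\<omega>\<in>E. \<forall>t\<in>circle. cdist (itc \<omega> (mg + mf) t) (?h t) < e"
    proof (intro ballI)
      fix \<omega> t assume w: "\<omega> \<in> E" and t: "t \<in> circle"
      have wS: "\<omega> \<in> W" using w E_def sets.sets_into_space[OF g1(1)] space_S by auto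
      define s where "s = itc \<omega> mg t"
      have sc: "s \<in> circle" using itc_mapsc[OF wS t] s_def by simp
      have gt: "g t \<in> circle" using mg t by (simp add: mapsc_def)
      have eq: "itc \<omega> (mg + mf) t = itc (shift mg \<omega>) mf s" using itc_add s_def by metis
      have c1: "cdist (itc (shift mg \<omega>) mf s) (f s) < e/2" using f1(4) w sc E_def by blast
      have "cdist s (g t) < d" using g1(4) w t E_def s_def by blast
      then have c2: "cdist (f s) (f (g t)) < e/2" using d(2) sc gt by blast
      have "cdist (itc (shift mg \<omega>) mf s) (f (g t)) \<le> cdist (itc (shift mg \<omega>) mf s) (f s) + cdist (f s) (f (g t))"
        using itc_mapsc[OF shift_W[OF wS] sc] mf sc gt by (intro cdist_triangle) (auto simp: mapsc_def)
      also have "\<dots> < e" using c1 c2 by simp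
      finally show "cdist (itc \<omega> (mg + mf) t) (?h t) < e" using eq t by simp
    qed
    then show "\<exists>m E. E \<in> sets seq.S \<and> dep E m \<and> emeasure seq.S E > 0 \<and>
      (\<forall>\<omega>\<in>E. \<forall>t\<in>circle. cdist (itc \<omega> m t) (?h t) < e)" using Es Ed Ep by blast
  qed
  then show ?case using uh mh by blast
qed

end

context setting
begin

lemma notgood_sets: "{\<omega> \<in> space seq.S. \<not> good q \<omega> A} \<in> sets seq.S"
proof -
  have "{\<omega> \<in> space seq.S. \<not> good q \<omega> A} = space seq.S - {\<omega> \<in> space seq.S. good q \<omega> A}" by blast
  then show ?thesis using good_sets by simp
qed

lemma cb_mono: "r \<le> r' \<Longrightarrow> cb c r \<subseteq> cb c r'"
  by (auto simp: cb_def)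

lemma radius_pw:
  assumes lc: "local_contraction_rate \<nu> q" and c: "c \<in> circle" and e: "e > 0"
  shows "\<exists>k. measure seq.S {\<omega> \<in> space seq.S. \<not> good q \<omega> (cb c (1 / (real k + 1)))} < e"
proof -
  have ae0: "AE \<omega> in seq.S. \<exists>a\<in>circle. \<exists>b\<in>circle. a \<noteq> b \<and> c \<in> oarc a b \<and>
          (\<forall>n. cdiam (itc \<omega> n ` carc a b) \<le> q ^ n)"
    using lc c unfolding local_contraction_rate_def S_eq by blast
  have ae: "AE \<omega> in seq.S. \<exists>k. good q \<omega> (cb c (1 / (real k + 1)))"
    using ae0
  proof (rule AE_mp)
    show "AE \<omega> in seq.S. (\<exists>a\<in>circle. \<exists>b\<in>circle. a \<noteq> b \<and> c \<in> oarc a b \<and>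
          (\<forall>n. cdiam (itc \<omega> n ` carc a b) \<le> q ^ n)) \<longrightarrow> (\<exists>k. good q \<omega> (cb c (1 / (real k + 1))))"
    proof (rule AE_I2, intro impI)
      fix \<omega> assume w: "\<omega> \<in> space seq.S" and
        h: "\<exists>a\<in>circle. \<exists>b\<in>circle. a \<noteq> b \<and> c \<in> oarc a b \<and> (\<forall>n. cdiam (itc \<omega> n ` carc a b) \<le> q ^ n)"
      have wW: "\<omega> \<in> W" using w space_S by simp
      then show "\<exists>k. good q \<omega> (cb c (1 / (real k + 1)))" using h local_good[OF wW c] by blast
    qed
  qed
  define E where "E = (\<lambda>k. {\<omega> \<in> space seq.S. \<not> good q \<omega> (cb c (1 / (real k + 1)))})"
  have Es: "range E \<subseteq> sets seq.S" using notgood_sets E_def by auto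
  have dec: "decseq E"
    unfolding decseq_def
  proof (intro allI impI subsetI)
    fix k k' :: nat and \<omega> assume kk: "k \<le> k'" and w: "\<omega> \<in> E k'"
    have "1 / (real k' + 1) \<le> 1 / (real k + 1)" using kk by (simp add: frac_le)
    then have sub: "cb c (1 / (real k' + 1)) \<subseteq> cb c (1 / (real k + 1))" by (rule cb_mono)
    show "\<omega> \<in> E k" using w good_mono[OF _ sub] unfolding E_def by blast
  qed
  have lim: "(\<lambda>k. measure seq.S (E k)) \<longlonglongrightarrow> measure seq.S (\<Inter>k. E k)"
    by (rule seq.P.finite_Lim_measure_decseq[OF Es dec])
  have Is: "(\<Inter>k. E k) \<in> sets seq.S" using Es by (intro sets.countable_INT) auto
  have eqs: "{\<omega> \<in> space seq.S. \<not> (\<exists>k. good q \<omega> (cb c (1 / (real k + 1))))} = (\<Inter>k. E k)"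
  proof -
    have gen: "{\<omega> \<in> space seq.S. \<not> (\<exists>k. G \<omega> k)} = (\<Inter>k. {\<omega> \<in> space seq.S. \<not> G \<omega> k})"
      for G :: "(nat \<Rightarrow> real \<Rightarrow> real) \<Rightarrow> nat \<Rightarrow> bool" by blast
    show ?thesis unfolding E_def using gen[of "\<lambda>\<omega> k. good q \<omega> (cb c (1 / (real k + 1)))"] by simp
  qed
  have "(AE \<omega> in seq.S. \<exists>k. good q \<omega> (cb c (1 / (real k + 1)))) \<longleftrightarrow> emeasure seq.S (\<Inter>k. E k) = 0"
    by (rule AE_iff_measurable[OF Is eqs])
  then have "emeasure seq.S (\<Inter>k. E k) = 0" using ae by blast
  then have "measure seq.S (\<Inter>k. E k) = 0" by (simp add: measure_def)
  then have "\<forall>\<^sub>F k in sequentially. measure seq.S (E k) < e"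
    using order_tendstoD(2)[OF lim] e by simp
  then obtain k where "measure seq.S (E k) < e" unfolding eventually_sequentially by blast
  then show ?thesis unfolding E_def by blast
qed

lemma radius:
  assumes lc: "local_contraction_rate \<nu> q" and e: "e > 0"
  shows "\<exists>r>0. r < 1/2 \<and> (\<forall>c\<in>circle. measure seq.S {\<omega> \<in> space seq.S. \<not> good q \<omega> (cb c r)} < e)"
proof (rule ccontr)
  assume H: "\<not> ?thesis"
  have "\<forall>n. \<exists>c. c \<in> circle \<and> \<not> measure seq.S {\<omega> \<in> space seq.S. \<not> good q \<omega> (cb c (1 / (real n + 3)))} < e"
  proof
    fix n
    have r: "1 / (real n + 3) > 0" "1 / (real n + 3) < 1/2" by (auto simp: field_simps)
    show "\<exists>c. c \<in> circle \<and> \<not> measure seq.S {\<omega> \<in> space seq.S. \<not> good q \<omega> (cb c (1 / (real n + 3)))} < e"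
    proof (rule ccontr)
      assume "\<not> (\<exists>c. c \<in> circle \<and> \<not> measure seq.S {\<omega> \<in> space seq.S. \<not> good q \<omega> (cb c (1 / (real n + 3)))} < e)"
      then have "\<forall>c\<in>circle. measure seq.S {\<omega> \<in> space seq.S. \<not> good q \<omega> (cb c (1 / (real n + 3)))} < e" by blast
      then have "\<exists>r>0. r < 1/2 \<and> (\<forall>c\<in>circle. measure seq.S {\<omega> \<in> space seq.S. \<not> good q \<omega> (cb c r)} < e)"
        using r by (intro exI[of _ "1 / (real n + 3)"]) simp
      then show False using H by blast
    qed
  qed
  from choice[OF this] obtain C where C0: "\<forall>n. C n \<in> circle \<and>
      \<not> measure seq.S {\<omega> \<in> space seq.S. \<not> good q \<omega> (cb (C n) (1 / (real n + 3)))} < e"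
    by blast
  then have C: "\<And>n. C n \<in> circle"
      "\<And>n. \<not> measure seq.S {\<omega> \<in> space seq.S. \<not> good q \<omega> (cb (C n) (1 / (real n + 3)))} < e"
    by auto
  obtain l \<phi> where l: "l \<in> circle" "strict_mono \<phi>" "(\<lambda>n. cdist (C (\<phi> n)) l) \<longlonglongrightarrow> 0"
    using seq_circle[of C, OF C(1)] by blast
  obtain k where k: "measure seq.S {\<omega> \<in> space seq.S. \<not> good q \<omega> (cb l (1 / (real k + 1)))} < e"
    using radius_pw[OF lc l(1) e] by blast
  define \<rho> where "\<rho> = 1 / (real k + 1)"
  have \<rho>: "\<rho> > 0" by (simp add: \<rho>_def)
  have "(0::real) < \<rho>/2" using \<rho> by simp
  from order_tendstoD(2)[OF l(3) this] obtain N1 where N1: "\<And>n. n \<ge> N1 \<Longrightarrow> cdist (C (\<phi> n)) l < \<rho>/2"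
    unfolding eventually_sequentially by blast
  obtain N2 where N2: "inverse (real (Suc N2)) < \<rho>/2" using reals_Archimedean[of "\<rho>/2"] \<rho> by auto
  define n where "n = max N1 N2"
  have d1: "cdist l (C (\<phi> n)) < \<rho>/2" using N1[of n] n_def cdist_sym by (metis max.cobounded1)
  have "\<phi> n \<ge> N2" using seq_suble[OF l(2), of n] n_def by simp
  then have "1 / (real (\<phi> n) + 3) \<le> inverse (real (Suc N2))"
    by (simp add: inverse_eq_divide frac_le)
  then have d2: "1 / (real (\<phi> n) + 3) < \<rho>/2" using N2 by simp
  have sub: "cb (C (\<phi> n)) (1 / (real (\<phi> n) + 3)) \<subseteq> cb l \<rho>"
  proof
    fix t assume t: "t \<in> cb (C (\<phi> n)) (1 / (real (\<phi> n) + 3))"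
    then have tc: "t \<in> circle" and dt: "cdist (C (\<phi> n)) t \<le> 1 / (real (\<phi> n) + 3)" by (auto simp: cb_def)
    have "cdist l t \<le> cdist l (C (\<phi> n)) + cdist (C (\<phi> n)) t" by (rule cdist_triangle[OF l(1) C(1) tc])
    also have "\<dots> \<le> \<rho>" using d1 d2 dt by simp
    finally show "t \<in> cb l \<rho>" using tc by (simp add: cb_def)
  qed
  have "{\<omega> \<in> space seq.S. \<not> good q \<omega> (cb (C (\<phi> n)) (1 / (real (\<phi> n) + 3)))} \<subseteq>
        {\<omega> \<in> space seq.S. \<not> good q \<omega> (cb l \<rho>)}"
    using good_mono[OF _ sub] by blast
  then have "measure seq.S {\<omega> \<in> space seq.S. \<not> good q \<omega> (cb (C (\<phi> n)) (1 / (real (\<phi> n) + 3)))} \<le>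
        measure seq.S {\<omega> \<in> space seq.S. \<not> good q \<omega> (cb l \<rho>)}"
    using notgood_sets by (intro seq.P.finite_measure_mono) auto
  then show False using C(2)[of "\<phi> n"] k \<rho>_def by simp
qed

end

context setting
begin

definition GoodPair :: "real \<Rightarrow> real \<Rightarrow> real \<Rightarrow> real \<Rightarrow> real \<Rightarrow> bool" where
  "GoodPair r u v c \<eta> \<longleftrightarrow> (\<exists>m E w. E \<in> sets seq.S \<and> dep E m \<and> measure seq.S E \<ge> c \<and> w \<in> circle \<and>
     (\<forall>u'\<in>circle. \<forall>v'\<in>circle. cdist u u' < \<eta> \<longrightarrow> cdist v v' < \<eta> \<longrightarrow>
        (\<forall>\<omega>\<in>E. cdist w (itc \<omega> m u') \<le> r \<and> cdist w (itc \<omega> m v') \<le> r)))"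

lemma GoodPair_pw:
  assumes prox: "proximal (gen_semigroup (support \<nu>))" and r: "r > 0"
    and u: "u \<in> circle" and v: "v \<in> circle"
  shows "\<exists>c>0. \<exists>\<eta>>0. GoodPair r u v c \<eta>"
proof -
  obtain gs where gs: "\<forall>n. gs n \<in> gen_semigroup (support \<nu>)" "(\<lambda>n. cdist (gs n u) (gs n v)) \<longlonglongrightarrow> 0"
    using prox u v unfolding proximal_def by blast
  have r4: "(0::real) < r/4" using r by simp
  from order_tendstoD(2)[OF gs(2) r4] obtain n0 where "cdist (gs n0 u) (gs n0 v) < r/4"
    unfolding eventually_sequentially by blast
  then obtain g where g: "g \<in> gen_semigroup (support \<nu>)" and guv: "cdist (g u) (g v) < r/4"
    using gs(1) by blast
  have ug: "ucont g" and mg: "mapsc g" and ag: "approx g" using approx_semigroup[OF g] by auto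
  obtain \<delta> where \<delta>: "\<delta> > 0" "\<forall>a\<in>circle. \<forall>b\<in>circle. cdist a b < \<delta> \<longrightarrow> cdist (g a) (g b) < r/4"
    using ug r4 unfolding ucont_def by blast
  obtain m E where E: "E \<in> sets seq.S" "dep E m" "emeasure seq.S E > 0"
      "\<forall>\<omega>\<in>E. \<forall>t\<in>circle. cdist (itc \<omega> m t) (g t) < r/4"
    using ag r4 unfolding approx_def by blast
  have cpos: "measure seq.S E > 0" using E(3) seq.P.emeasure_eq_measure by simp
  have gu: "g u \<in> circle" and gv: "g v \<in> circle" using mg u v by (auto simp: mapsc_def)
  have "GoodPair r u v (measure seq.S E) \<delta>"
    unfolding GoodPair_def
  proof (intro exI[of _ m] exI[of _ E] exI[of _ "g u"] conjI ballI impI)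
    show "E \<in> sets seq.S" "dep E m" "measure seq.S E \<le> measure seq.S E" "g u \<in> circle" using E gu by auto
    fix u' v' \<omega> assume u': "u' \<in> circle" and v': "v' \<in> circle" and du: "cdist u u' < \<delta>" and dv: "cdist v v' < \<delta>"
      and w: "\<omega> \<in> E"
    have wW: "\<omega> \<in> W" using w sets.sets_into_space[OF E(1)] space_S by auto
    have Fu: "itc \<omega> m u' \<in> circle" and Fv: "itc \<omega> m v' \<in> circle" using itc_mapsc[OF wW] u' v' by auto
    have gu': "g u' \<in> circle" and gv': "g v' \<in> circle" using mg u' v' by (auto simp: mapsc_def)
    have a1: "cdist (g u) (g u') < r/4" using \<delta> u u' du by blast
    have a2: "cdist (g u') (itc \<omega> m u') < r/4" using E(4) w u' cdist_sym by metis
    have b1: "cdist (g v) (g v') < r/4" using \<delta> v v' dv by blast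
    have b2: "cdist (g v') (itc \<omega> m v') < r/4" using E(4) w v' cdist_sym by metis
    have "cdist (g u) (itc \<omega> m u') \<le> cdist (g u) (g u') + cdist (g u') (itc \<omega> m u')"
      by (rule cdist_triangle[OF gu gu' Fu])
    then show "cdist (g u) (itc \<omega> m u') \<le> r" using a1 a2 r by linarith
    have "cdist (g u) (itc \<omega> m v') \<le> cdist (g u) (g v) + cdist (g v) (itc \<omega> m v')"
      by (rule cdist_triangle[OF gu gv Fv])
    also have "\<dots> \<le> cdist (g u) (g v) + (cdist (g v) (g v') + cdist (g v') (itc \<omega> m v'))"
      using cdist_triangle[OF gv gv' Fv] by simp
    finally show "cdist (g u) (itc \<omega> m v') \<le> r" using guv b1 b2 r by linarith
  qed
  then show ?thesis using cpos \<delta>(1) by blast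
qed

lemma GoodPair_mono:
  assumes G: "GoodPair r u v c \<eta>" and c: "c' \<le> c" and u: "u \<in> circle" and v: "v \<in> circle"
    and u2: "u2 \<in> circle" and v2: "v2 \<in> circle"
    and du: "cdist u u2 + \<eta>' \<le> \<eta>" and dv: "cdist v v2 + \<eta>' \<le> \<eta>"
  shows "GoodPair r u2 v2 c' \<eta>'"
proof -
  obtain m E w where E: "E \<in> sets seq.S" "dep E m" "measure seq.S E \<ge> c" "w \<in> circle"
     "\<forall>u'\<in>circle. \<forall>v'\<in>circle. cdist u u' < \<eta> \<longrightarrow> cdist v v' < \<eta> \<longrightarrow>
        (\<forall>\<omega>\<in>E. cdist w (itc \<omega> m u') \<le> r \<and> cdist w (itc \<omega> m v') \<le> r)"
    using G unfolding GoodPair_def by blast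
  show ?thesis
    unfolding GoodPair_def
  proof (intro exI[of _ m] exI[of _ E] exI[of _ w] conjI ballI impI)
    show "E \<in> sets seq.S" "dep E m" "c' \<le> measure seq.S E" "w \<in> circle" using E c by auto
    fix u' v' assume u': "u' \<in> circle" and v': "v' \<in> circle" and du': "cdist u2 u' < \<eta>'" and dv': "cdist v2 v' < \<eta>'"
    have "cdist u u' < \<eta>" using cdist_triangle[OF u u2 u'] du du' by simp
    moreover have "cdist v v' < \<eta>" using cdist_triangle[OF v v2 v'] dv dv' by simp
    ultimately have "\<forall>\<omega>\<in>E. cdist w (itc \<omega> m u') \<le> r \<and> cdist w (itc \<omega> m v') \<le> r" using E(5) u' v' by blast
    then show "\<And>\<omega>. \<omega> \<in> E \<Longrightarrow> cdist w (itc \<omega> m u') \<le> r" "\<And>\<omega>. \<omega> \<in> E \<Longrightarrow> cdist w (itc \<omega> m v') \<le> r" by auto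
  qed
qed

lemma GoodPair_unif:
  assumes prox: "proximal (gen_semigroup (support \<nu>))" and r: "r > 0"
  shows "\<exists>c>0. \<exists>\<eta>>0. \<forall>u\<in>circle. \<forall>v\<in>circle. GoodPair r u v c \<eta>"
proof (rule ccontr)
  assume H: "\<not> ?thesis"
  have "\<forall>n. \<exists>p. fst p \<in> circle \<and> snd p \<in> circle \<and> \<not> GoodPair r (fst p) (snd p) (1 / (real n + 1)) (1 / (real n + 1))"
  proof
    fix n
    have pos: "(1 / (real n + 1)) > 0" by simp
    show "\<exists>p. fst p \<in> circle \<and> snd p \<in> circle \<and> \<not> GoodPair r (fst p) (snd p) (1 / (real n + 1)) (1 / (real n + 1))"
    proof (rule ccontr)
      assume "\<not> (\<exists>p. fst p \<in> circle \<and> snd p \<in> circle \<and> \<not> GoodPair r (fst p) (snd p) (1 / (real n + 1)) (1 / (real n + 1)))"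
      then have "\<forall>u\<in>circle. \<forall>v\<in>circle. GoodPair r u v (1 / (real n + 1)) (1 / (real n + 1))"
        by (metis fst_conv snd_conv)
      then show False using H pos by blast
    qed
  qed
  from choice[OF this] obtain P where P0: "\<forall>n. fst (P n) \<in> circle \<and> snd (P n) \<in> circle \<and>
       \<not> GoodPair r (fst (P n)) (snd (P n)) (1 / (real n + 1)) (1 / (real n + 1))" by blast
  define U where "U = (\<lambda>n. fst (P n))"
  define V where "V = (\<lambda>n. snd (P n))"
  have U: "\<And>n. U n \<in> circle" and V: "\<And>n. V n \<in> circle"
    and NG: "\<And>n. \<not> GoodPair r (U n) (V n) (1 / (real n + 1)) (1 / (real n + 1))"
    using P0 U_def V_def by auto
  obtain l1 \<phi>1 where l1: "l1 \<in> circle" "strict_mono \<phi>1" "(\<lambda>n. cdist (U (\<phi>1 n)) l1) \<longlonglongrightarrow> 0"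
    using seq_circle[of U, OF U] by blast
  have V1: "\<And>n. (V \<circ> \<phi>1) n \<in> circle" using V by simp
  obtain l2 \<phi>2 where l2: "l2 \<in> circle" "strict_mono \<phi>2" "(\<lambda>n. cdist ((V \<circ> \<phi>1) (\<phi>2 n)) l2) \<longlonglongrightarrow> 0"
    using seq_circle[of "V \<circ> \<phi>1", OF V1] by blast
  define \<psi> where "\<psi> = \<phi>1 \<circ> \<phi>2"
  have \<psi>: "strict_mono \<psi>" unfolding \<psi>_def using l1(2) l2(2) by (rule strict_mono_o)
  have limU: "(\<lambda>n. cdist (U (\<psi> n)) l1) \<longlonglongrightarrow> 0"
    using LIMSEQ_subseq_LIMSEQ[OF l1(3) l2(2)] by (simp add: \<psi>_def o_def)
  have limV: "(\<lambda>n. cdist (V (\<psi> n)) l2) \<longlonglongrightarrow> 0" using l2(3) by (simp add: \<psi>_def o_def)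
  obtain c \<eta> where c: "c > 0" "\<eta> > 0" and G: "GoodPair r l1 l2 c \<eta>"
    using GoodPair_pw[OF prox r l1(1) l2(1)] by blast
  have "(0::real) < \<eta>/2" using c by simp
  from order_tendstoD(2)[OF limU this] obtain N1 where N1: "\<And>n. n \<ge> N1 \<Longrightarrow> cdist (U (\<psi> n)) l1 < \<eta>/2"
    unfolding eventually_sequentially by blast
  from order_tendstoD(2)[OF limV \<open>0 < \<eta>/2\<close>] obtain N2 where N2: "\<And>n. n \<ge> N2 \<Longrightarrow> cdist (V (\<psi> n)) l2 < \<eta>/2"
    unfolding eventually_sequentially by blast
  have "min c (\<eta>/2) > 0" using c by simp
  then obtain N3 where N3: "inverse (real (Suc N3)) < min c (\<eta>/2)" using reals_Archimedean by blast
  define n where "n = max N1 (max N2 N3)"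
  have "\<psi> n \<ge> N3" using seq_suble[OF \<psi>, of n] n_def by simp
  then have "1 / (real (\<psi> n) + 1) \<le> inverse (real (Suc N3))"
    by (simp add: inverse_eq_divide frac_le)
  then have sm: "1 / (real (\<psi> n) + 1) < c" "1 / (real (\<psi> n) + 1) < \<eta>/2" using N3 by auto
  have d1: "cdist l1 (U (\<psi> n)) < \<eta>/2" using N1[of n] n_def cdist_sym by simp
  have d2: "cdist l2 (V (\<psi> n)) < \<eta>/2" using N2[of n] n_def cdist_sym by simp
  have "GoodPair r (U (\<psi> n)) (V (\<psi> n)) (1 / (real (\<psi> n) + 1)) (1 / (real (\<psi> n) + 1))"
    by (rule GoodPair_mono[OF G _ l1(1) l2(1) U V]) (use sm d1 d2 in auto)
  then show False using NG by blast
qed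

end

locale trial = setting +
  fixes q x y r c0 \<eta> \<epsilon> :: real and N :: nat
    and mm :: "nat \<times> nat \<Rightarrow> nat" and EE :: "nat \<times> nat \<Rightarrow> (nat \<Rightarrow> real \<Rightarrow> real) set"
    and ww :: "nat \<times> nat \<Rightarrow> real"
  assumes x: "x \<in> circle" and y: "y \<in> circle" and xy: "x \<noteq> y" and q: "0 < q" "q < 1"
    and r: "0 < r" "r < 1/2" and N: "N \<ge> 1" "1 / real N \<le> \<eta>"
    and cellprop: "\<And>p. p \<in> {..<N} \<times> {..<N} \<Longrightarrow> EE p \<in> sets seq.S \<and> dep (EE p) (mm p) \<and>
       measure seq.S (EE p) \<ge> c0 \<and> ww p \<in> circle \<and>
       (\<forall>u'\<in>circle. \<forall>v'\<in>circle. cdist (real (fst p) / real N) u' < \<eta> \<longrightarrow> cdist (real (snd p) / real N) v' < \<eta> \<longrightarrow>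
          (\<forall>\<omega>\<in>EE p. cdist (ww p) (itc \<omega> (mm p) u') \<le> r \<and> cdist (ww p) (itc \<omega> (mm p) v') \<le> r))"
    and NGb: "\<And>c. c \<in> circle \<Longrightarrow> measure seq.S {\<omega> \<in> space seq.S. \<not> good q \<omega> (cb c r)} < \<epsilon>"
begin

definition cells :: "(nat \<times> nat) set" where "cells = {..<N} \<times> {..<N}"

lemma cells_fin: "finite cells" by (simp add: cells_def)

definition M :: nat where "M = 1 + (\<Sum>p\<in>cells. mm p)"

lemma mm_le_M: "p \<in> cells \<Longrightarrow> mm p \<le> M"
  unfolding M_def using member_le_sum[of p cells mm] cells_fin by simp

definition J :: "nat \<Rightarrow> (nat \<Rightarrow> real \<Rightarrow> real) \<Rightarrow> nat \<times> nat" where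
  "J k \<omega> = (nat \<lfloor>real N * itc \<omega> (k * M) x\<rfloor>, nat \<lfloor>real N * itc \<omega> (k * M) y\<rfloor>)"

definition Succ :: "nat \<Rightarrow> (nat \<Rightarrow> real \<Rightarrow> real) set" where
  "Succ k = {\<omega> \<in> space seq.S. shift (k * M) \<omega> \<in> EE (J k \<omega>)}"

definition Fail :: "nat \<Rightarrow> (nat \<Rightarrow> real \<Rightarrow> real) set" where
  "Fail k = space seq.S - (\<Union>l<k. Succ l)"

definition A :: "nat \<Rightarrow> nat \<times> nat \<Rightarrow> (nat \<Rightarrow> real \<Rightarrow> real) set" where
  "A k p = {\<omega> \<in> Fail k. J k \<omega> = p}"

definition B :: "nat \<Rightarrow> nat \<times> nat \<Rightarrow> (nat \<Rightarrow> real \<Rightarrow> real) set" where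
  "B k p = {\<omega> \<in> A k p. shift (k * M) \<omega> \<in> EE p}"

definition NG :: "real \<Rightarrow> (nat \<Rightarrow> real \<Rightarrow> real) set" where
  "NG c = {\<omega> \<in> space seq.S. \<not> good q \<omega> (cb c r)}"

definition Cb :: "nat \<Rightarrow> nat \<times> nat \<Rightarrow> (nat \<Rightarrow> real \<Rightarrow> real) set" where
  "Cb k p = {\<omega> \<in> B k p. shift (k * M + mm p) \<omega> \<in> NG (ww p)}"

lemma floor_cell:
  assumes u: "u \<in> circle"
  shows "nat \<lfloor>real N * u\<rfloor> < N" "cdist (real (nat \<lfloor>real N * u\<rfloor>) / real N) u < \<eta>"
proof -
  have u0: "0 \<le> u" "u < 1" using u by (auto simp: circle_def)
  have Np: "real N > 0" using N by simp
  have f0: "0 \<le> \<lfloor>real N * u\<rfloor>" using u0 Np by simp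
  have "real N * u < real N" using u0 Np by simp
  then have "\<lfloor>real N * u\<rfloor> < int N" by linarith
  then show "nat \<lfloor>real N * u\<rfloor> < N" using f0 by linarith
  have e: "real (nat \<lfloor>real N * u\<rfloor>) = real_of_int \<lfloor>real N * u\<rfloor>" using f0 by simp
  have l1: "real_of_int \<lfloor>real N * u\<rfloor> \<le> real N * u" by linarith
  have l2: "real N * u < real_of_int \<lfloor>real N * u\<rfloor> + 1" by linarith
  define i where "i = real_of_int \<lfloor>real N * u\<rfloor>"
  have "i / real N \<le> u" using l1 Np by (simp add: i_def divide_le_eq mult.commute)
  moreover have "u - i / real N < 1 / real N"
  proof -
    have "u - i / real N = (real N * u - i) / real N" using Np by (simp add: field_simps)
    also have "\<dots> < 1 / real N"
    proof (rule divide_strict_right_mono)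
      show "real N * u - i < 1" using l2 i_def by linarith
      show "0 < real N" by (rule Np)
    qed
    finally show ?thesis .
  qed
  ultimately have "\<bar>i / real N - u\<bar> < \<eta>" using N by simp
  then show "cdist (real (nat \<lfloor>real N * u\<rfloor>) / real N) u < \<eta>"
    using cdist_le_abs[of "i / real N" u] e i_def by simp
qed

lemma J_cells: "\<omega> \<in> space seq.S \<Longrightarrow> J k \<omega> \<in> cells"
  using floor_cell(1) itc_mapsc[of \<omega> x] itc_mapsc[of \<omega> y] x y space_S
  unfolding J_def cells_def by auto

lemma J_near:
  assumes w: "\<omega> \<in> space seq.S" and p: "J k \<omega> = p"
  shows "cdist (real (fst p) / real N) (itc \<omega> (k * M) x) < \<eta>"
    "cdist (real (snd p) / real N) (itc \<omega> (k * M) y) < \<eta>"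
  using floor_cell(2) itc_mapsc[of \<omega> x "k * M"] itc_mapsc[of \<omega> y "k * M"] x y space_S w p
  unfolding J_def by auto

lemma flo_meas:
  assumes z: "z \<in> circle"
  shows "(\<lambda>\<omega>. nat \<lfloor>real N * itc \<omega> t z\<rfloor>) \<in> measurable seq.S (count_space UNIV)"
proof -
  have [measurable]: "(\<lambda>\<omega>. itc \<omega> t z) \<in> borel_measurable seq.S" by (rule itc_meas[OF z])
  have "(\<lambda>\<omega>. \<lfloor>real N * itc \<omega> t z\<rfloor>) \<in> measurable seq.S (count_space UNIV)" by measurable
  moreover have "nat \<in> measurable (count_space UNIV) (count_space UNIV)" by simp
  ultimately show ?thesis using measurable_compose by blast
qed

lemma Jset: "{\<omega> \<in> space seq.S. J k \<omega> = p} \<in> sets seq.S"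
proof -
  have "{\<omega> \<in> space seq.S. J k \<omega> = p} =
     ((\<lambda>\<omega>. nat \<lfloor>real N * itc \<omega> (k * M) x\<rfloor>) -` {fst p} \<inter> space seq.S) \<inter>
     ((\<lambda>\<omega>. nat \<lfloor>real N * itc \<omega> (k * M) y\<rfloor>) -` {snd p} \<inter> space seq.S)"
    unfolding J_def by (cases p) auto
  also have "\<dots> \<in> sets seq.S"
    using measurable_sets[OF flo_meas[OF x], of "{fst p}"] measurable_sets[OF flo_meas[OF y], of "{snd p}"] by simp
  finally show ?thesis .
qed

lemma shift_pre: "E \<in> sets seq.S \<Longrightarrow> {\<omega> \<in> space seq.S. shift T \<omega> \<in> E} \<in> sets seq.S"
proof -
  assume E: "E \<in> sets seq.S"
  have "{\<omega> \<in> space seq.S. shift T \<omega> \<in> E} = shift T -` E \<inter> space seq.S" by auto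
  then show ?thesis using measurable_sets[OF shift_meas E] by simp
qed

lemma Succ_sets: "Succ k \<in> sets seq.S"
proof -
  have "Succ k = (\<Union>p\<in>cells. {\<omega> \<in> space seq.S. J k \<omega> = p} \<inter> {\<omega> \<in> space seq.S. shift (k * M) \<omega> \<in> EE p})"
    unfolding Succ_def using J_cells by auto
  also have "\<dots> \<in> sets seq.S"
    using Jset shift_pre cellprop cells_fin unfolding cells_def by (intro sets.finite_UN) auto
  finally show ?thesis .
qed

lemma Fail_sets: "Fail k \<in> sets seq.S"
  unfolding Fail_def using Succ_sets by (intro sets.Diff sets.finite_UN) auto

lemma A_sets: "A k p \<in> sets seq.S"
proof -
  have "A k p = Fail k \<inter> {\<omega> \<in> space seq.S. J k \<omega> = p}"
    unfolding A_def using sets.sets_into_space[OF Fail_sets] by auto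
  then show ?thesis using Fail_sets Jset by simp
qed

lemma B_sets: "p \<in> cells \<Longrightarrow> B k p \<in> sets seq.S"
proof -
  assume p: "p \<in> cells"
  have "B k p = A k p \<inter> {\<omega> \<in> space seq.S. shift (k * M) \<omega> \<in> EE p}"
    unfolding B_def using sets.sets_into_space[OF A_sets[of k p]] by auto
  moreover have "EE p \<in> sets seq.S" using cellprop p unfolding cells_def by blast
  ultimately show ?thesis using A_sets[of k p] shift_pre[of "EE p" "k * M"] by simp
qed

lemma NG_sets: "NG c \<in> sets seq.S"
  unfolding NG_def by (rule notgood_sets)

lemma Cb_sets: "p \<in> cells \<Longrightarrow> Cb k p \<in> sets seq.S"
proof -
  assume p: "p \<in> cells"
  have "Cb k p = B k p \<inter> {\<omega> \<in> space seq.S. shift (k * M + mm p) \<omega> \<in> NG (ww p)}"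
    unfolding Cb_def using sets.sets_into_space[OF B_sets[OF p]] by auto
  then show ?thesis using B_sets[OF p] shift_pre NG_sets by simp
qed

end

context trial
begin

lemma dep_mono:
  assumes d: "dep E m" and mm': "m \<le> m'"
  shows "dep E m'"
  unfolding dep_def
proof (intro ballI impI)
  fix \<omega> \<omega>' assume w: "\<omega> \<in> space seq.S" "\<omega>' \<in> space seq.S" and ag: "\<forall>i<m'. \<omega> i = \<omega>' i"
  have "\<forall>i<m. \<omega> i = \<omega>' i" using ag mm' by simp
  then show "\<omega> \<in> E \<longleftrightarrow> \<omega>' \<in> E" using d[unfolded dep_def, rule_format, OF w] by blast
qed

lemma J_agree:
  assumes "\<forall>i<k * M. \<omega> i = \<omega>' i"
  shows "J k \<omega> = J k \<omega>'"
proof -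
  have "itc \<omega> (k * M) z = itc \<omega>' (k * M) z" for z using assms by (intro itc_dep) auto
  then show ?thesis unfolding J_def by simp
qed

lemma EE_sets: "p \<in> cells \<Longrightarrow> EE p \<in> sets seq.S"
  using cellprop unfolding cells_def by blast

lemma EE_dep: "p \<in> cells \<Longrightarrow> dep (EE p) M"
proof -
  assume p: "p \<in> cells"
  have "dep (EE p) (mm p)" using cellprop p unfolding cells_def by blast
  then show ?thesis using mm_le_M[OF p] by (rule dep_mono)
qed

lemma shift_space: "\<omega> \<in> space seq.S \<Longrightarrow> shift T \<omega> \<in> space seq.S"
  using space_S shift_W by auto

lemma Succ_agree:
  assumes w: "\<omega> \<in> space seq.S" "\<omega>' \<in> space seq.S" and ag: "\<forall>i<k * M + M. \<omega> i = \<omega>' i"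
  shows "\<omega> \<in> Succ k \<longleftrightarrow> \<omega>' \<in> Succ k"
proof -
  have "\<forall>i<k * M. \<omega> i = \<omega>' i" using ag by simp
  then have Jeq: "J k \<omega> = J k \<omega>'" by (rule J_agree)
  have p: "J k \<omega> \<in> cells" using J_cells[OF w(1)] .
  have "\<forall>i<M. shift (k * M) \<omega> i = shift (k * M) \<omega>' i" using ag by (simp add: shift_def add.commute)
  then have "shift (k * M) \<omega> \<in> EE (J k \<omega>) \<longleftrightarrow> shift (k * M) \<omega>' \<in> EE (J k \<omega>)"
    using EE_dep[OF p, unfolded dep_def, rule_format, OF shift_space[OF w(1)] shift_space[OF w(2)]] by blast
  then show ?thesis unfolding Succ_def using w Jeq by simp
qed

lemma Fail_dep: "dep (Fail k) (k * M)"
  unfolding dep_def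
proof (intro ballI impI)
  fix \<omega> \<omega>' assume w: "\<omega> \<in> space seq.S" "\<omega>' \<in> space seq.S" and ag: "\<forall>i<k * M. \<omega> i = \<omega>' i"
  have "\<omega> \<in> Succ l \<longleftrightarrow> \<omega>' \<in> Succ l" if l: "l < k" for l
  proof -
    have "l * M + M \<le> k * M" using l by (metis Suc_leI add.commute mult_Suc mult_le_mono1)
    then have "\<forall>i<l * M + M. \<omega> i = \<omega>' i" using ag by simp
    then show ?thesis by (rule Succ_agree[OF w])
  qed
  then show "\<omega> \<in> Fail k \<longleftrightarrow> \<omega>' \<in> Fail k" unfolding Fail_def using w by blast
qed

lemma A_dep: "dep (A k p) (k * M)"
  unfolding dep_def
proof (intro ballI impI)
  fix \<omega> \<omega>' assume w: "\<omega> \<in> space seq.S" "\<omega>' \<in> space seq.S" and ag: "\<forall>i<k * M. \<omega> i = \<omega>' i"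
  have "\<omega> \<in> Fail k \<longleftrightarrow> \<omega>' \<in> Fail k" using Fail_dep[unfolded dep_def, rule_format, OF w ag[rule_format]] .
  moreover have "J k \<omega> = J k \<omega>'" using J_agree[OF ag] .
  ultimately show "\<omega> \<in> A k p \<longleftrightarrow> \<omega>' \<in> A k p" unfolding A_def by simp
qed

lemma B_dep: "p \<in> cells \<Longrightarrow> dep (B k p) (k * M + mm p)"
  unfolding dep_def
proof (intro ballI impI)
  fix \<omega> \<omega>' assume p: "p \<in> cells" and w: "\<omega> \<in> space seq.S" "\<omega>' \<in> space seq.S"
    and ag: "\<forall>i<k * M + mm p. \<omega> i = \<omega>' i"
  have ag1: "\<forall>i<k * M. \<omega> i = \<omega>' i" using ag by simp
  have a1: "\<omega> \<in> A k p \<longleftrightarrow> \<omega>' \<in> A k p" using A_dep[unfolded dep_def, rule_format, OF w ag1[rule_format]] .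
  have dp: "dep (EE p) (mm p)" using cellprop p unfolding cells_def by blast
  have "\<forall>i<mm p. shift (k * M) \<omega> i = shift (k * M) \<omega>' i" using ag by (simp add: shift_def add.commute)
  then have "shift (k * M) \<omega> \<in> EE p \<longleftrightarrow> shift (k * M) \<omega>' \<in> EE p"
    using dp[unfolded dep_def, rule_format, OF shift_space[OF w(1)] shift_space[OF w(2)]] by blast
  then show "\<omega> \<in> B k p \<longleftrightarrow> \<omega>' \<in> B k p" unfolding B_def using a1 by simp
qed

lemma meas_indep:
  assumes "X \<in> sets seq.S" "dep X T" "Y \<in> sets seq.S"
  shows "measure seq.S {\<omega> \<in> X. shift T \<omega> \<in> Y} = measure seq.S X * measure seq.S Y"
proof -
  have "emeasure seq.S {\<omega> \<in> X. shift T \<omega> \<in> Y} = emeasure seq.S X * emeasure seq.S Y"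
    by (rule indep_shift[OF assms])
  then show ?thesis
    by (simp add: seq.P.emeasure_eq_measure ennreal_mult''[symmetric] measure_nonneg)
qed

lemma mB: "p \<in> cells \<Longrightarrow> measure seq.S (B k p) = measure seq.S (A k p) * measure seq.S (EE p)"
  unfolding B_def using meas_indep[OF A_sets A_dep EE_sets] by simp

lemma mCb: "p \<in> cells \<Longrightarrow> measure seq.S (Cb k p) = measure seq.S (B k p) * measure seq.S (NG (ww p))"
  unfolding Cb_def using meas_indep[OF B_sets B_dep NG_sets] by simp

end

context trial
begin

lemma Fail_Suc: "Fail (Suc k) = Fail k - Succ k"
  unfolding Fail_def by (auto simp: lessThan_Suc)

lemma FS_union: "Fail k \<inter> Succ k = (\<Union>p\<in>cells. B k p)"
proof (intro set_eqI iffI)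
  fix \<omega> assume w: "\<omega> \<in> Fail k \<inter> Succ k"
  then have ws: "\<omega> \<in> space seq.S" unfolding Fail_def by blast
  have "J k \<omega> \<in> cells" by (rule J_cells[OF ws])
  moreover have "\<omega> \<in> B k (J k \<omega>)" using w unfolding B_def A_def Succ_def by blast
  ultimately show "\<omega> \<in> (\<Union>p\<in>cells. B k p)" by blast
next
  fix \<omega> assume "\<omega> \<in> (\<Union>p\<in>cells. B k p)"
  then obtain p where p: "p \<in> cells" "\<omega> \<in> B k p" by blast
  then have "\<omega> \<in> Fail k" "J k \<omega> = p" "shift (k * M) \<omega> \<in> EE p" unfolding B_def A_def by auto
  moreover have "\<omega> \<in> space seq.S" using \<open>\<omega> \<in> Fail k\<close> unfolding Fail_def by blast
  ultimately show "\<omega> \<in> Fail k \<inter> Succ k" unfolding Succ_def by simp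
qed

lemma Fail_union: "Fail k = (\<Union>p\<in>cells. A k p)"
proof (intro set_eqI iffI)
  fix \<omega> assume w: "\<omega> \<in> Fail k"
  then have ws: "\<omega> \<in> space seq.S" unfolding Fail_def by blast
  then show "\<omega> \<in> (\<Union>p\<in>cells. A k p)" using J_cells[OF ws] w unfolding A_def by blast
next
  fix \<omega> assume "\<omega> \<in> (\<Union>p\<in>cells. A k p)"
  then show "\<omega> \<in> Fail k" unfolding A_def by blast
qed

lemma disjA: "disjoint_family_on (A k) cells"
  unfolding disjoint_family_on_def A_def by auto

lemma disjB: "disjoint_family_on (B k) cells"
  unfolding disjoint_family_on_def B_def A_def by auto

lemma c0_le1: "c0 \<le> 1"
proof -
  have "(0, 0) \<in> cells" using N unfolding cells_def by simp
  then have "c0 \<le> measure seq.S (EE (0,0))" using cellprop unfolding cells_def by blast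
  also have "\<dots> \<le> 1" by simp
  finally show ?thesis .
qed

lemma Fail_rec: "measure seq.S (Fail (Suc k)) \<le> (1 - c0) * measure seq.S (Fail k)"
proof -
  have Bs: "B k ` cells \<subseteq> sets seq.S" using B_sets by auto
  have As: "A k ` cells \<subseteq> sets seq.S" using A_sets by auto
  have "measure seq.S (Fail k \<inter> Succ k) = (\<Sum>p\<in>cells. measure seq.S (B k p))"
    unfolding FS_union by (rule seq.P.finite_measure_finite_Union[OF cells_fin Bs disjB])
  also have "\<dots> = (\<Sum>p\<in>cells. measure seq.S (A k p) * measure seq.S (EE p))"
    using mB by (intro sum.cong) auto
  also have "\<dots> \<ge> (\<Sum>p\<in>cells. c0 * measure seq.S (A k p))"
  proof (rule sum_mono)
    fix p assume p: "p \<in> cells"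
    have "c0 \<le> measure seq.S (EE p)" using cellprop p unfolding cells_def by blast
    then show "c0 * measure seq.S (A k p) \<le> measure seq.S (A k p) * measure seq.S (EE p)"
      using mult_right_mono[OF _ measure_nonneg, of c0 "measure seq.S (EE p)" seq.S "A k p"]
      by (simp add: mult.commute)
  qed
  finally have ge: "measure seq.S (Fail k \<inter> Succ k) \<ge> c0 * (\<Sum>p\<in>cells. measure seq.S (A k p))"
    by (simp add: sum_distrib_left)
  have "measure seq.S (Fail k) = (\<Sum>p\<in>cells. measure seq.S (A k p))"
    by (subst Fail_union) (rule seq.P.finite_measure_finite_Union[OF cells_fin As disjA])
  then have ge2: "measure seq.S (Fail k \<inter> Succ k) \<ge> c0 * measure seq.S (Fail k)" using ge by simp
  have "Fail (Suc k) = Fail k - (Fail k \<inter> Succ k)" using Fail_Suc by blast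
  then have "measure seq.S (Fail (Suc k)) = measure seq.S (Fail k) - measure seq.S (Fail k \<inter> Succ k)"
    using Fail_sets Succ_sets by (simp add: seq.P.finite_measure_Diff)
  then show ?thesis using ge2 by (simp add: algebra_simps)
qed

lemma Fail_pow: "measure seq.S (Fail K) \<le> (1 - c0) ^ K"
proof (induction K)
  case 0
  then show ?case by simp
next
  case (Suc K)
  have "measure seq.S (Fail (Suc K)) \<le> (1 - c0) * measure seq.S (Fail K)" by (rule Fail_rec)
  also have "\<dots> \<le> (1 - c0) * (1 - c0) ^ K" using Suc c0_le1 by (intro mult_left_mono) auto
  finally show ?case by simp
qed

lemma FS_meas: "measure seq.S (Fail k \<inter> Succ k) = measure seq.S (Fail k) - measure seq.S (Fail (Suc k))"
proof -
  have "Fail (Suc k) = Fail k - (Fail k \<inter> Succ k)" using Fail_Suc by blast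
  then have "measure seq.S (Fail (Suc k)) = measure seq.S (Fail k) - measure seq.S (Fail k \<inter> Succ k)"
    using Fail_sets Succ_sets by (simp add: seq.P.finite_measure_Diff)
  then show ?thesis by simp
qed

definition Z :: "nat \<Rightarrow> (nat \<Rightarrow> real \<Rightarrow> real) set" where
  "Z K = Fail K \<union> (\<Union>kp\<in>{..<K} \<times> cells. Cb (fst kp) (snd kp))"

lemma Z_sets: "Z K \<in> sets seq.S"
  unfolding Z_def using Fail_sets Cb_sets cells_fin by (intro sets.Un sets.finite_UN) auto

lemma eps_nonneg: "\<epsilon> \<ge> 0"
proof -
  show ?thesis using NGb[OF x] measure_nonneg[of seq.S "{\<omega> \<in> space seq.S. \<not> good q \<omega> (cb x r)}"]
    by linarith
qed

lemma Z_meas: "measure seq.S (Z K) \<le> (1 - c0) ^ K + \<epsilon>"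
proof -
  let ?U = "\<Union>kp\<in>{..<K} \<times> cells. Cb (fst kp) (snd kp)"
  have fin: "finite ({..<K} \<times> cells)" using cells_fin by simp
  have Cs: "(\<lambda>kp. Cb (fst kp) (snd kp)) ` ({..<K} \<times> cells) \<subseteq> sets seq.S" using Cb_sets by auto
  have Us: "?U \<in> sets seq.S" using Cs fin by (intro sets.finite_UN) auto
  have h1: "measure seq.S (Z K) \<le> measure seq.S (Fail K) + measure seq.S ?U"
    unfolding Z_def using Fail_sets Us by (rule measure_Un_le)
  have h2: "measure seq.S ?U \<le> (\<Sum>kp\<in>{..<K} \<times> cells. measure seq.S (Cb (fst kp) (snd kp)))"
    by (rule seq.P.finite_measure_subadditive_finite[OF fin Cs])
  have h3: "(\<Sum>kp\<in>{..<K} \<times> cells. measure seq.S (Cb (fst kp) (snd kp))) = (\<Sum>k<K. \<Sum>p\<in>cells. measure seq.S (Cb k p))"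
    by (simp add: sum.cartesian_product split_beta)
  have h4: "(\<Sum>k<K. \<Sum>p\<in>cells. measure seq.S (Cb k p)) \<le> (\<Sum>k<K. \<Sum>p\<in>cells. \<epsilon> * measure seq.S (B k p))"
  proof (intro sum_mono)
    fix k p assume p: "p \<in> cells"
    have wc: "ww p \<in> circle" using cellprop p unfolding cells_def by blast
    have "measure seq.S (NG (ww p)) \<le> \<epsilon>" using NGb[OF wc] unfolding NG_def by simp
    then have "measure seq.S (B k p) * measure seq.S (NG (ww p)) \<le> measure seq.S (B k p) * \<epsilon>"
      by (intro mult_left_mono) auto
    then show "measure seq.S (Cb k p) \<le> \<epsilon> * measure seq.S (B k p)"
      using mCb[OF p] by (simp add: mult.commute)
  qed
  have h5: "(\<Sum>k<K. \<Sum>p\<in>cells. \<epsilon> * measure seq.S (B k p)) = \<epsilon> * (\<Sum>k<K. measure seq.S (Fail k \<inter> Succ k))"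
  proof -
    have "(\<Sum>p\<in>cells. measure seq.S (B k p)) = measure seq.S (Fail k \<inter> Succ k)" for k
      unfolding FS_union using B_sets by (intro seq.P.finite_measure_finite_Union[symmetric, OF cells_fin _ disjB]) auto
    then have "(\<Sum>p\<in>cells. \<epsilon> * measure seq.S (B k p)) = \<epsilon> * measure seq.S (Fail k \<inter> Succ k)" for k
      by (simp add: sum_distrib_left[symmetric])
    then show ?thesis by (simp add: sum_distrib_left)
  qed
  have h6: "(\<Sum>k<K. measure seq.S (Fail k \<inter> Succ k)) = measure seq.S (Fail 0) - measure seq.S (Fail K)"
    unfolding FS_meas by (rule sum_lessThan_telescope')
  have h7: "measure seq.S (Fail 0) - measure seq.S (Fail K) \<le> 1"
    using seq.P.prob_le_1[of "Fail 0"] measure_nonneg[of seq.S "Fail K"] by linarith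
  have "\<epsilon> * (\<Sum>k<K. measure seq.S (Fail k \<inter> Succ k)) \<le> \<epsilon> * 1"
    using h6 h7 eps_nonneg by (intro mult_left_mono) auto
  then have "measure seq.S (Z K) \<le> measure seq.S (Fail K) + \<epsilon>"
    using h1 h2 h3 h4 h5 by linarith
  then show ?thesis using Fail_pow[of K] by simp
qed

end

context trial
begin

lemma Bad_sub: "{\<omega> \<in> space seq.S. \<not> good q \<omega> (carc x y) \<and> \<not> good q \<omega> (carc y x)} \<subseteq> Z K"
proof
  fix \<omega> assume "\<omega> \<in> {\<omega> \<in> space seq.S. \<not> good q \<omega> (carc x y) \<and> \<not> good q \<omega> (carc y x)}"
  then have ws: "\<omega> \<in> space seq.S" and ng1: "\<not> good q \<omega> (carc x y)" and ng2: "\<not> good q \<omega> (carc y x)" by auto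
  have wW: "\<omega> \<in> W" using ws space_S by simp
  show "\<omega> \<in> Z K"
  proof (cases "\<omega> \<in> Fail K")
    case True
    then show ?thesis unfolding Z_def by blast
  next
    case False
    then have "\<exists>l. l < K \<and> \<omega> \<in> Succ l" using ws unfolding Fail_def by blast
    then obtain k where k: "k < K \<and> \<omega> \<in> Succ k" "\<forall>m<k. \<not> (m < K \<and> \<omega> \<in> Succ m)"
      using exists_least_iff[of "\<lambda>l. l < K \<and> \<omega> \<in> Succ l"] by blast
    have kK: "k < K" and sk: "\<omega> \<in> Succ k" using k by auto
    have fk: "\<omega> \<in> Fail k" using k(2) kK ws unfolding Fail_def by auto
    define p where "p = J k \<omega>"
    have pc: "p \<in> cells" using J_cells[OF ws] p_def by simp
    have ee: "shift (k * M) \<omega> \<in> EE p" using sk unfolding Succ_def p_def by blast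
    have bk: "\<omega> \<in> B k p" using fk ee p_def unfolding B_def A_def by simp
    have cp: "ww p \<in> circle \<and> (\<forall>u'\<in>circle. \<forall>v'\<in>circle. cdist (real (fst p) / real N) u' < \<eta> \<longrightarrow>
          cdist (real (snd p) / real N) v' < \<eta> \<longrightarrow>
          (\<forall>\<omega>\<in>EE p. cdist (ww p) (itc \<omega> (mm p) u') \<le> r \<and> cdist (ww p) (itc \<omega> (mm p) v') \<le> r))"
      using cellprop pc unfolding cells_def by blast
    have ux: "itc \<omega> (k * M) x \<in> circle" and uy: "itc \<omega> (k * M) y \<in> circle"
      using itc_mapsc[OF wW] x y by auto
    have n1: "cdist (real (fst p) / real N) (itc \<omega> (k * M) x) < \<eta>"
      and n2: "cdist (real (snd p) / real N) (itc \<omega> (k * M) y) < \<eta>"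
      using J_near[OF ws p_def[symmetric]] by auto
    have "cdist (ww p) (itc (shift (k * M) \<omega>) (mm p) (itc \<omega> (k * M) x)) \<le> r \<and>
          cdist (ww p) (itc (shift (k * M) \<omega>) (mm p) (itc \<omega> (k * M) y)) \<le> r"
      using cp ux uy n1 n2 ee by blast
    then have dx: "cdist (ww p) (itc \<omega> (k * M + mm p) x) \<le> r"
      and dy: "cdist (ww p) (itc \<omega> (k * M + mm p) y) \<le> r"
      using itc_add[of \<omega> "k * M" "mm p"] by auto
    have "\<not> good q (shift (k * M + mm p) \<omega>) (cb (ww p) r)"
    proof
      assume g: "good q (shift (k * M + mm p) \<omega>) (cb (ww p) r)"
      have "good q \<omega> (carc x y) \<or> good q \<omega> (carc y x)"
        by (rule transport[OF wW q x y xy _ r(2) dx dy g]) (use cp in blast)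
      then show False using ng1 ng2 by blast
    qed
    then have "shift (k * M + mm p) \<omega> \<in> NG (ww p)" using shift_space[OF ws] unfolding NG_def by blast
    then have "\<omega> \<in> Cb k p" using bk unfolding Cb_def by blast
    then show ?thesis unfolding Z_def using kK pc by force
  qed
qed

end

context setting
begin

lemma main_bound:
  assumes lc: "local_contraction_rate \<nu> q" and prox: "proximal (gen_semigroup (support \<nu>))"
    and q: "0 < q" "q < 1" and x: "x \<in> circle" and y: "y \<in> circle" and xy: "x \<noteq> y" and e: "\<epsilon> > 0"
  shows "\<exists>Zs\<in>sets seq.S. {\<omega> \<in> space seq.S. \<not> good q \<omega> (carc x y) \<and> \<not> good q \<omega> (carc y x)} \<subseteq> Zs
           \<and> measure seq.S Zs \<le> 2 * \<epsilon>"
proof -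
  obtain r where r: "r > 0" "r < 1/2"
     and NGb: "\<And>c. c \<in> circle \<Longrightarrow> measure seq.S {\<omega> \<in> space seq.S. \<not> good q \<omega> (cb c r)} < \<epsilon>"
    using radius[OF lc e] by blast
  obtain c0 \<eta> where c0: "c0 > 0" and eta: "\<eta> > 0" and GP: "\<And>u v. u \<in> circle \<Longrightarrow> v \<in> circle \<Longrightarrow> GoodPair r u v c0 \<eta>"
    using GoodPair_unif[OF prox r(1)] by blast
  obtain N0 where N0: "inverse (real (Suc N0)) < \<eta>" using reals_Archimedean[OF eta] by blast
  define N where "N = Suc N0"
  have N: "N \<ge> 1" "1 / real N \<le> \<eta>" using N0 by (auto simp: N_def inverse_eq_divide)
  have "\<forall>p\<in>{..<N} \<times> {..<N}. \<exists>t. snd (snd t) \<in> circle \<and> fst (snd t) \<in> sets seq.S \<and> dep (fst (snd t)) (fst t) \<and>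
       measure seq.S (fst (snd t)) \<ge> c0 \<and>
       (\<forall>u'\<in>circle. \<forall>v'\<in>circle. cdist (real (fst p) / real N) u' < \<eta> \<longrightarrow> cdist (real (snd p) / real N) v' < \<eta> \<longrightarrow>
          (\<forall>\<omega>\<in>fst (snd t). cdist (snd (snd t)) (itc \<omega> (fst t) u') \<le> r \<and> cdist (snd (snd t)) (itc \<omega> (fst t) v') \<le> r))"
  proof
    fix p assume p: "p \<in> {..<N} \<times> {..<N}"
    have "real (fst p) / real N \<in> circle" "real (snd p) / real N \<in> circle"
      using p N by (auto simp: circle_def field_simps)
    then have "GoodPair r (real (fst p) / real N) (real (snd p) / real N) c0 \<eta>" by (rule GP)
    then obtain m E w where "E \<in> sets seq.S" "dep E m" "measure seq.S E \<ge> c0" "w \<in> circle"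
       "\<forall>u'\<in>circle. \<forall>v'\<in>circle. cdist (real (fst p) / real N) u' < \<eta> \<longrightarrow> cdist (real (snd p) / real N) v' < \<eta> \<longrightarrow>
          (\<forall>\<omega>\<in>E. cdist w (itc \<omega> m u') \<le> r \<and> cdist w (itc \<omega> m v') \<le> r)"
      unfolding GoodPair_def by blast
    then show "\<exists>t. snd (snd t) \<in> circle \<and> fst (snd t) \<in> sets seq.S \<and> dep (fst (snd t)) (fst t) \<and>
       measure seq.S (fst (snd t)) \<ge> c0 \<and>
       (\<forall>u'\<in>circle. \<forall>v'\<in>circle. cdist (real (fst p) / real N) u' < \<eta> \<longrightarrow> cdist (real (snd p) / real N) v' < \<eta> \<longrightarrow>
          (\<forall>\<omega>\<in>fst (snd t). cdist (snd (snd t)) (itc \<omega> (fst t) u') \<le> r \<and> cdist (snd (snd t)) (itc \<omega> (fst t) v') \<le> r))"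
      by (intro exI[of _ "(m, E, w)"]) simp
  qed
  from bchoice[OF this] obtain f where f: "\<forall>p\<in>{..<N} \<times> {..<N}. snd (snd (f p)) \<in> circle \<and> fst (snd (f p)) \<in> sets seq.S \<and> dep (fst (snd (f p))) (fst (f p)) \<and>
       measure seq.S (fst (snd (f p))) \<ge> c0 \<and>
       (\<forall>u'\<in>circle. \<forall>v'\<in>circle. cdist (real (fst p) / real N) u' < \<eta> \<longrightarrow> cdist (real (snd p) / real N) v' < \<eta> \<longrightarrow>
          (\<forall>\<omega>\<in>fst (snd (f p)). cdist (snd (snd (f p))) (itc \<omega> (fst (f p)) u') \<le> r \<and> cdist (snd (snd (f p))) (itc \<omega> (fst (f p)) v') \<le> r))"
    by blast
  define mm where "mm = (\<lambda>p. fst (f p))"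
  define EE where "EE = (\<lambda>p. fst (snd (f p)))"
  define ww where "ww = (\<lambda>p. snd (snd (f p)))"
  interpret T: trial \<nu> q x y r c0 \<eta> \<epsilon> N mm EE ww
  proof (unfold_locales)
    show "x \<in> circle" "y \<in> circle" "x \<noteq> y" "0 < q" "q < 1" "0 < r" "r < 1/2" "1 \<le> N" "1 / real N \<le> \<eta>"
      using x y xy q r N by auto
    show "\<And>c. c \<in> circle \<Longrightarrow> measure seq.S {\<omega> \<in> space seq.S. \<not> good q \<omega> (cb c r)} < \<epsilon>" by (rule NGb)
    fix p assume "p \<in> {..<N} \<times> {..<N}"
    then show "EE p \<in> sets seq.S \<and> dep (EE p) (mm p) \<and>
       measure seq.S (EE p) \<ge> c0 \<and> ww p \<in> circle \<and>
       (\<forall>u'\<in>circle. \<forall>v'\<in>circle. cdist (real (fst p) / real N) u' < \<eta> \<longrightarrow> cdist (real (snd p) / real N) v' < \<eta> \<longrightarrow>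
          (\<forall>\<omega>\<in>EE p. cdist (ww p) (itc \<omega> (mm p) u') \<le> r \<and> cdist (ww p) (itc \<omega> (mm p) v') \<le> r))"
      using f unfolding mm_def EE_def ww_def by blast
  qed
  have "(\<lambda>n. (1 - c0) ^ n) \<longlonglongrightarrow> 0"
    using c0 T.c0_le1 by (intro LIMSEQ_power_zero) auto
  from order_tendstoD(2)[OF this e] obtain K where K: "(1 - c0) ^ K < \<epsilon>"
    unfolding eventually_sequentially by blast
  show ?thesis
    using T.Z_sets[of K] T.Bad_sub[of K] T.Z_meas[of K] K by (intro bexI[of _ "T.Z K"]) auto
qed

lemma ae_good:
  assumes lc: "local_contraction_rate \<nu> q" and prox: "proximal (gen_semigroup (support \<nu>))"
    and q: "0 < q" "q < 1" and x: "x \<in> circle" and y: "y \<in> circle" and xy: "x \<noteq> y"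
  shows "AE \<omega> in seq.S. good q \<omega> (carc x y) \<or> good q \<omega> (carc y x)"
proof -
  have "\<forall>n::nat. \<exists>Zs. Zs \<in> sets seq.S \<and> {\<omega> \<in> space seq.S. \<not> good q \<omega> (carc x y) \<and> \<not> good q \<omega> (carc y x)} \<subseteq> Zs
           \<and> measure seq.S Zs \<le> 2 * (1 / (real n + 1))"
  proof
    fix n :: nat
    have "(1 / (real n + 1)) > 0" by simp
    from main_bound[OF lc prox q x y xy this]
    show "\<exists>Zs. Zs \<in> sets seq.S \<and> {\<omega> \<in> space seq.S. \<not> good q \<omega> (carc x y) \<and> \<not> good q \<omega> (carc y x)} \<subseteq> Zs
           \<and> measure seq.S Zs \<le> 2 * (1 / (real n + 1))" by blast
  qed
  from choice[OF this] obtain Zs where Zs: "\<And>n. Zs n \<in> sets seq.S"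
    "\<And>n. {\<omega> \<in> space seq.S. \<not> good q \<omega> (carc x y) \<and> \<not> good q \<omega> (carc y x)} \<subseteq> Zs n"
    "\<And>n. measure seq.S (Zs n) \<le> 2 * (1 / (real n + 1))" by blast
  define Nn where "Nn = (\<Inter>n. Zs n)"
  have Ns: "Nn \<in> sets seq.S" unfolding Nn_def using Zs(1) by (intro sets.countable_INT) auto
  have "measure seq.S Nn \<le> 2 * (1 / (real n + 1))" for n
  proof -
    have "measure seq.S Nn \<le> measure seq.S (Zs n)" unfolding Nn_def using Zs(1) by (intro seq.P.finite_measure_mono) auto
    then show ?thesis using Zs(3)[of n] by simp
  qed
  moreover have "(\<lambda>n. 2 * (1 / (real n + 1))) \<longlonglongrightarrow> (0::real)"
  proof -
    have l: "(\<lambda>n. 2 / real (Suc n)) \<longlonglongrightarrow> (0::real)" using LIMSEQ_Suc[OF lim_const_over_n[of 2]] by simp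
    have "(\<lambda>n. 2 * (1 / (real n + 1))) = (\<lambda>n. 2 / real (Suc n))" by (simp add: fun_eq_iff add.commute)
    then show ?thesis using l by simp
  qed
  ultimately have "measure seq.S Nn \<le> 0" using LIMSEQ_le_const by blast
  then have "measure seq.S Nn = 0" using measure_nonneg[of seq.S Nn] by simp
  then have "emeasure seq.S Nn = 0" using seq.P.emeasure_eq_measure by simp
  then have "Nn \<in> null_sets seq.S" using Ns by (simp add: null_sets_def)
  moreover have "{\<omega> \<in> space seq.S. \<not> (good q \<omega> (carc x y) \<or> good q \<omega> (carc y x))} \<subseteq> Nn"
    unfolding Nn_def using Zs(2) by blast
  ultimately show ?thesis by (rule AE_I')
qed

end

theorem proposition2p5:
  fixes \<nu> :: "(real \<Rightarrow> real) measure" and q :: real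
  assumes "prob_space \<nu>"
    and "space \<nu> = HomS1"
    and "sets \<nu> = borel_HomS1"
    and "proximal (gen_semigroup (support \<nu>))"
    and "\<not> fixes_point (gen_semigroup (support \<nu>))"
    and "local_contraction_rate \<nu> q"
  shows "\<forall>x\<in>circle. \<forall>y\<in>circle. x \<noteq> y \<longrightarrow>
    (AE \<omega> in prod_measure \<nu>.
       limsup (\<lambda>n. ereal (ln (cdiam (itc \<omega> n ` carc x y)) / real n)) \<le> ereal (ln q)
     \<or> limsup (\<lambda>n. ereal (ln (cdiam (itc \<omega> n ` carc y x)) / real n)) \<le> ereal (ln q))"
proof (intro ballI impI)
  interpret setting \<nu> using assms(1-3) by (simp add: setting_def)
  have q: "0 < q" "q < 1" using assms(6) unfolding local_contraction_rate_def by auto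
  fix x y assume x: "x \<in> circle" and y: "y \<in> circle" and xy: "x \<noteq> y"
  have ae: "AE \<omega> in seq.S. good q \<omega> (carc x y) \<or> good q \<omega> (carc y x)"
    by (rule ae_good[OF assms(6) assms(4) q x y xy])
  have "AE \<omega> in seq.S.
       limsup (\<lambda>n. ereal (ln (cdiam (itc \<omega> n ` carc x y)) / real n)) \<le> ereal (ln q)
     \<or> limsup (\<lambda>n. ereal (ln (cdiam (itc \<omega> n ` carc y x)) / real n)) \<le> ereal (ln q)"
    using ae
  proof (rule AE_mp)
    show "AE \<omega> in seq.S. (good q \<omega> (carc x y) \<or> good q \<omega> (carc y x)) \<longrightarrow>
       (limsup (\<lambda>n. ereal (ln (cdiam (itc \<omega> n ` carc x y)) / real n)) \<le> ereal (ln q)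
     \<or> limsup (\<lambda>n. ereal (ln (cdiam (itc \<omega> n ` carc y x)) / real n)) \<le> ereal (ln q))"
    proof (rule AE_I2, intro impI)
      fix \<omega> assume w: "\<omega> \<in> space seq.S" and g: "good q \<omega> (carc x y) \<or> good q \<omega> (carc y x)"
      have wW: "\<omega> \<in> W" using w space_S by simp
      from g show "limsup (\<lambda>n. ereal (ln (cdiam (itc \<omega> n ` carc x y)) / real n)) \<le> ereal (ln q)
     \<or> limsup (\<lambda>n. ereal (ln (cdiam (itc \<omega> n ` carc y x)) / real n)) \<le> ereal (ln q)"
      proof
        assume "good q \<omega> (carc x y)"
        then have "goodfull q \<omega> (carc x y)" using good_goodfull[OF wW] carc_sub_circle[OF x y] by blast
        then show ?thesis using goodfull_limsup[OF wW q(1) x y xy] by blast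
      next
        assume "good q \<omega> (carc y x)"
        then have "goodfull q \<omega> (carc y x)" using good_goodfull[OF wW] carc_sub_circle[OF y x] by blast
        then show ?thesis using goodfull_limsup[OF wW q(1) y x xy[symmetric]] by blast
      qed
    qed
  qed
  then show "AE \<omega> in prod_measure \<nu>.
       limsup (\<lambda>n. ereal (ln (cdiam (itc \<omega> n ` carc x y)) / real n)) \<le> ereal (ln q)
     \<or> limsup (\<lambda>n. ereal (ln (cdiam (itc \<omega> n ` carc y x)) / real n)) \<le> ereal (ln q)"
    unfolding S_eq .
qed

end
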